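(* Let $\Gamma$ be a countably infinite group, $n\in\mathbb N$, and $f=M-g\in M_n(\mathbb Z\Gamma)$ with $M=\mathrm{diag}(M_1,\dots,M_n)$ for positive integers $M_k$, $M_k>\sum_{m\in[n]}\|g^{(mk)}\|_1$ for every $k\in[n]$, and suppose there is a subsemigroup $P\subseteq\Gamma\setminus\{e_\Gamma\}$ containing $\mathrm{supp}(g^{(mk)})$ for all $m,k\in[n]$. Let $h\in(\mathbb Z\Gamma)^n\setminus(\mathbb Z\Gamma)^nf$. Then there exist $(s,k)\in\Gamma\times[n]$ and an integer $1\le j\le M_k-1$ such that $(hf^{-1})_{s,k}-j/M_k\in\mathbb Z$.
   Context: $\mathbb Z\Gamma$ is the integral group ring (finitely supported $\mathbb Z$-valued functions on $\Gamma$ with convolution $(fg)_t=\sum_sf_{ts^{-1}}g_s$); $\ell^1_{\mathbb R}(\Gamma)$ likewise. Under the hypotheses $f$ is invertible in $M_n(\ell^1_{\mathbb R}(\Gamma))$. $h\in(\mathbb Z\Gamma)^n$ is a row vector, $(hF)_m=\sum_kh_kF^{(km)}$, and $(hf^{-1})_{s,k}$ denotes the value at $s$ of the $k$-th entry of $hf^{-1}\in(\ell^1_{\mathbb R}(\Gamma))^n$; $(\mathbb Z\Gamma)^nf=\{af: a\in(\mathbb Z\Gamma)^n\}$. *)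

theory Defs
  imports "HOL-Analysis.Analysis"
begin

text \<open>The group \<Gamma> is a type of class group_add (not necessarily commutative,
written additively: e = 0, s t = s + t, s^-1 = - s). Indices [n] are {..<n}.
Elements of the integral group ring are functions 'g => int with finite support,
elements of l^1_R are absolutely summable functions 'g => real.
n x n matrices are functions nat => nat => ..., row vectors nat => ..., only
indices < n matter.\<close>

definition supp :: "('g \<Rightarrow> 'a::zero) \<Rightarrow> 'g set" where
  "supp a = {s. a s \<noteq> 0}"

definition in_ZG :: "('g \<Rightarrow> int) \<Rightarrow> bool" where
  "in_ZG a \<longleftrightarrow> finite (supp a)"

definition in_l1 :: "('g \<Rightarrow> real) \<Rightarrow> bool" where
  "in_l1 a \<longleftrightarrow> (\<lambda>s. \<bar>a s\<bar>) summable_on UNIV"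

definition norm1_ZG :: "('g \<Rightarrow> int) \<Rightarrow> int" where
  "norm1_ZG a = (\<Sum>s\<in>supp a. \<bar>a s\<bar>)"

definition conv_ZG :: "('g::group_add \<Rightarrow> int) \<Rightarrow> ('g \<Rightarrow> int) \<Rightarrow> 'g \<Rightarrow> int" where
  "conv_ZG a b t = (\<Sum>s\<in>supp b. a (t - s) * b s)"

definition conv_l1 :: "('g::group_add \<Rightarrow> real) \<Rightarrow> ('g \<Rightarrow> real) \<Rightarrow> 'g \<Rightarrow> real" where
  "conv_l1 a b t = (\<Sum>\<^sub>\<infinity>s. a (t - s) * b s)"

definition delta_e :: "'g::group_add \<Rightarrow> 'a::{zero,one}" where
  "delta_e t = (if t = 0 then 1 else 0)"

definition fmat :: "(nat \<Rightarrow> int) \<Rightarrow> (nat \<Rightarrow> nat \<Rightarrow> 'g::group_add \<Rightarrow> int) \<Rightarrow> nat \<Rightarrow> nat \<Rightarrow> 'g \<Rightarrow> int" where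
  "fmat M g m k t = (if m = k then M k * delta_e t else 0) - g m k t"

definition mat_mul_l1 :: "nat \<Rightarrow> (nat \<Rightarrow> nat \<Rightarrow> 'g::group_add \<Rightarrow> real) \<Rightarrow> (nat \<Rightarrow> nat \<Rightarrow> 'g \<Rightarrow> real)
    \<Rightarrow> nat \<Rightarrow> nat \<Rightarrow> 'g \<Rightarrow> real" where
  "mat_mul_l1 n A B i k = (\<lambda>t. \<Sum>j<n. conv_l1 (A i j) (B j k) t)"

definition vec_mat_l1 :: "nat \<Rightarrow> (nat \<Rightarrow> 'g::group_add \<Rightarrow> real) \<Rightarrow> (nat \<Rightarrow> nat \<Rightarrow> 'g \<Rightarrow> real)
    \<Rightarrow> nat \<Rightarrow> 'g \<Rightarrow> real" where
  "vec_mat_l1 n h F m = (\<lambda>t. \<Sum>k<n. conv_l1 (h k) (F k m) t)"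

definition vec_mat_ZG :: "nat \<Rightarrow> (nat \<Rightarrow> 'g::group_add \<Rightarrow> int) \<Rightarrow> (nat \<Rightarrow> nat \<Rightarrow> 'g \<Rightarrow> int)
    \<Rightarrow> nat \<Rightarrow> 'g \<Rightarrow> int" where
  "vec_mat_ZG n h F m = (\<lambda>t. \<Sum>k<n. conv_ZG (h k) (F k m) t)"

definition to_real_mat :: "(nat \<Rightarrow> nat \<Rightarrow> 'g \<Rightarrow> int) \<Rightarrow> nat \<Rightarrow> nat \<Rightarrow> 'g \<Rightarrow> real" where
  "to_real_mat f i j t = real_of_int (f i j t)"

definition inv_l1 :: "nat \<Rightarrow> (nat \<Rightarrow> nat \<Rightarrow> 'g::group_add \<Rightarrow> real) \<Rightarrow> nat \<Rightarrow> nat \<Rightarrow> 'g \<Rightarrow> real" where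
  "inv_l1 n f = (THE F. (\<forall>i j. (n \<le> i \<or> n \<le> j) \<longrightarrow> F i j = (\<lambda>_. 0))
      \<and> (\<forall>i<n. \<forall>j<n. in_l1 (F i j))
      \<and> (\<forall>i<n. \<forall>k<n. mat_mul_l1 n F f i k = (if i = k then delta_e else (\<lambda>_. 0)))
      \<and> (\<forall>i<n. \<forall>k<n. mat_mul_l1 n f F i k = (if i = k then delta_e else (\<lambda>_. 0))))"

definition in_row_module :: "nat \<Rightarrow> (nat \<Rightarrow> nat \<Rightarrow> 'g::group_add \<Rightarrow> int) \<Rightarrow> (nat \<Rightarrow> 'g \<Rightarrow> int) \<Rightarrow> bool" where
  "in_row_module n f h \<longleftrightarrow> (\<exists>a. (\<forall>k<n. in_ZG (a k)) \<and> (\<forall>m<n. h m = vec_mat_ZG n a f m))"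

end

theory Submission
  imports Defs
begin

abbreviation fs :: "('g \<Rightarrow> real) \<Rightarrow> bool" where "fs a \<equiv> finite (supp a)"

lemma conv_right_fin:
  fixes a b :: "'g::group_add \<Rightarrow> real"
  assumes "finite S" "\<And>s. s \<notin> S \<Longrightarrow> a (t - s) * b s = 0"
  shows "conv_l1 a b t = (\<Sum>s\<in>S. a (t - s) * b s)"
  unfolding conv_l1_def
  by (subst infsum_cong_neutral[where T=S and g="\<lambda>s. a (t - s) * b s"]) (use assms in auto)

lemma conv_left_fin:
  fixes a b :: "'g::group_add \<Rightarrow> real"
  assumes "finite S" "\<And>s. s \<notin> S \<Longrightarrow> a s = 0"
  shows "conv_l1 a b t = (\<Sum>u\<in>S. a u * b (- u + t))"
proof -
  have inj: "inj_on (\<lambda>u. - u + t) S" by (auto intro: inj_onI)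
  have "conv_l1 a b t = (\<Sum>s\<in>(\<lambda>u. - u + t) ` S. a (t - s) * b s)"
  proof (rule conv_right_fin)
    fix s assume "s \<notin> (\<lambda>u. - u + t) ` S"
    moreover have "s = - (t - s) + t" by (simp add: minus_diff_eq add.assoc)
    ultimately have "t - s \<notin> S" by (metis image_eqI)
    thus "a (t - s) * b s = 0" using assms by simp
  qed (use assms in auto)
  also have "\<dots> = (\<Sum>u\<in>S. a u * b (- u + t))"
  proof -
    have e: "\<And>u. t - (- u + t) = u" by (simp only: diff_conv_add_uminus minus_add minus_minus add_minus_cancel)
    show ?thesis by (subst sum.reindex[OF inj]) (simp only: o_def e)
  qed
  finally show ?thesis .
qed



lemma supp_iff: "s \<notin> supp a \<longleftrightarrow> a s = 0" by (simp add: supp_def)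

lemma conv_right:
  fixes a b :: "'g::group_add \<Rightarrow> real"
  assumes "finite S" "supp b \<subseteq> S"
  shows "conv_l1 a b t = (\<Sum>s\<in>S. a (t - s) * b s)"
  by (rule conv_right_fin) (use assms in \<open>auto simp: supp_def\<close>)

lemma conv_left:
  fixes a b :: "'g::group_add \<Rightarrow> real"
  assumes "finite S" "supp a \<subseteq> S"
  shows "conv_l1 a b t = (\<Sum>u\<in>S. a u * b (- u + t))"
  by (rule conv_left_fin) (use assms in \<open>auto simp: supp_def\<close>)

lemma supp_delta: "supp (delta_e :: 'g::group_add \<Rightarrow> real) = {0}"
  by (auto simp: supp_def delta_e_def)

lemma conv_delta_left: "conv_l1 (\<lambda>t. c * delta_e t) b t = c * b t"
  by (subst conv_left[where S="{0}"]) (auto simp: supp_def delta_e_def)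

lemma conv_delta_right: "conv_l1 a (\<lambda>t. c * delta_e t) t = c * a t"
  by (subst conv_right[where S="{0}"]) (auto simp: supp_def delta_e_def)

lemma conv_delta_left1: "conv_l1 delta_e b t = b t"
  using conv_delta_left[of 1 b t] by simp

lemma conv_delta_right1: "conv_l1 a delta_e t = a t"
  using conv_delta_right[of a 1 t] by simp

lemma conv_zero_left: "conv_l1 (\<lambda>_. 0) b t = 0"
  by (simp add: conv_l1_def)

lemma conv_zero_right: "conv_l1 a (\<lambda>_. 0) t = 0"
  by (simp add: conv_l1_def)

lemma conv_sum_left:
  fixes b :: "'g::group_add \<Rightarrow> real"
  assumes "fs b" "finite I"
  shows "conv_l1 (\<lambda>t. \<Sum>j\<in>I. a j t) b t = (\<Sum>j\<in>I. conv_l1 (a j) b t)"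
proof -
  have "conv_l1 (\<lambda>t. \<Sum>j\<in>I. a j t) b t = (\<Sum>s\<in>supp b. (\<Sum>j\<in>I. a j (t - s)) * b s)"
    by (rule conv_right[OF assms(1) order_refl])
  also have "\<dots> = (\<Sum>s\<in>supp b. \<Sum>j\<in>I. a j (t - s) * b s)"
    by (simp only: sum_distrib_right)
  also have "\<dots> = (\<Sum>j\<in>I. \<Sum>s\<in>supp b. a j (t - s) * b s)"
    by (rule sum.swap)
  also have "\<dots> = (\<Sum>j\<in>I. conv_l1 (a j) b t)"
    by (simp only: conv_right[OF assms(1) order_refl])
  finally show ?thesis .
qed

lemma supp_sum: "supp (\<lambda>t. \<Sum>j\<in>I. b j t) \<subseteq> (\<Union>j\<in>I. supp (b j))"
proof
  fix t assume "t \<in> supp (\<lambda>t. \<Sum>j\<in>I. b j t)"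
  hence "(\<Sum>j\<in>I. b j t) \<noteq> 0" by (simp add: supp_def)
  then obtain j where "j \<in> I" "b j t \<noteq> 0" by (meson sum.neutral)
  thus "t \<in> (\<Union>j\<in>I. supp (b j))" by (auto simp: supp_def)
qed

lemma conv_sum_right:
  fixes a :: "'g::group_add \<Rightarrow> real"
  assumes "\<And>j. j \<in> I \<Longrightarrow> fs (b j)" "finite I"
  shows "conv_l1 a (\<lambda>t. \<Sum>j\<in>I. b j t) t = (\<Sum>j\<in>I. conv_l1 a (b j) t)"
proof -
  let ?S = "\<Union>j\<in>I. supp (b j)"
  have fin: "finite ?S" using assms by auto
  have "conv_l1 a (\<lambda>t. \<Sum>j\<in>I. b j t) t = (\<Sum>s\<in>?S. a (t - s) * (\<Sum>j\<in>I. b j s))"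
    by (rule conv_right[OF fin supp_sum])
  also have "\<dots> = (\<Sum>s\<in>?S. \<Sum>j\<in>I. a (t - s) * b j s)"
    by (simp only: sum_distrib_left)
  also have "\<dots> = (\<Sum>j\<in>I. \<Sum>s\<in>?S. a (t - s) * b j s)"
    by (rule sum.swap)
  also have "\<dots> = (\<Sum>j\<in>I. conv_l1 a (b j) t)"
    by (rule sum.cong[OF refl], rule conv_right[symmetric, OF fin]) auto
  finally show ?thesis .
qed

lemma conv_diff_left:
  fixes b :: "'g::group_add \<Rightarrow> real"
  assumes "fs b"
  shows "conv_l1 (\<lambda>t. a1 t - a2 t) b t = conv_l1 a1 b t - conv_l1 a2 b t"
  by (simp add: conv_right[OF assms order_refl] left_diff_distrib sum_subtractf)

lemma conv_scale_left:
  fixes b :: "'g::group_add \<Rightarrow> real"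
  assumes "fs b"
  shows "conv_l1 (\<lambda>t. c * a t) b t = c * conv_l1 a b t"
  by (simp add: conv_right[OF assms order_refl] sum_distrib_left mult.assoc)

lemma conv_div_left:
  fixes b :: "'g::group_add \<Rightarrow> real"
  assumes "fs b"
  shows "conv_l1 (\<lambda>t. a t / c) b t = conv_l1 a b t / c"
  using conv_scale_left[OF assms, of "1/c" a t] by (simp add: field_simps)

lemma supp_diff: "supp (\<lambda>t. (a t::real) - b t) \<subseteq> supp a \<union> supp b"
  by (auto simp: supp_def)

lemma conv_diff_right:
  fixes a :: "'g::group_add \<Rightarrow> real"
  assumes "fs b1" "fs b2"
  shows "conv_l1 a (\<lambda>t. b1 t - b2 t) t = conv_l1 a b1 t - conv_l1 a b2 t"
proof -
  have fin: "finite (supp b1 \<union> supp b2)" using assms by auto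
  show ?thesis
    by (simp add: conv_right[OF fin supp_diff] conv_right[OF fin] right_diff_distrib sum_subtractf)
qed

lemma conv_scale_right:
  fixes a :: "'g::group_add \<Rightarrow> real"
  assumes "fs b"
  shows "conv_l1 a (\<lambda>t. c * b t) t = c * conv_l1 a b t"
proof -
  have "supp (\<lambda>t. c * b t) \<subseteq> supp b" by (auto simp: supp_def)
  thus ?thesis
    by (simp add: conv_right[OF assms] conv_right[OF assms order_refl] sum_distrib_left mult.left_commute)
qed

lemma conv_div_right:
  fixes a :: "'g::group_add \<Rightarrow> real"
  assumes "fs b"
  shows "conv_l1 a (\<lambda>t. b t / c) t = conv_l1 a b t / c"
  using conv_scale_right[OF assms, of a "1/c" t] by (simp add: field_simps)

lemma supp_conv:
  fixes a b :: "'g::group_add \<Rightarrow> real"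
  assumes "fs a" "fs b"
  shows "supp (conv_l1 a b) \<subseteq> (\<lambda>(u,s). u + s) ` (supp a \<times> supp b)"
proof
  fix t assume t: "t \<in> supp (conv_l1 a b)"
  have "conv_l1 a b t = (\<Sum>s\<in>supp b. a (t - s) * b s)" by (rule conv_right[OF assms(2) order_refl])
  moreover have "conv_l1 a b t \<noteq> 0" using t by (simp add: supp_def)
  ultimately obtain s where "s \<in> supp b" "a (t - s) * b s \<noteq> 0"
    by (metis (mono_tags, lifting) sum.neutral)
  hence "t - s \<in> supp a" "s \<in> supp b" by (auto simp: supp_def)
  thus "t \<in> (\<lambda>(u,s). u + s) ` (supp a \<times> supp b)"
    by (auto intro!: image_eqI[where x="(t - s, s)"])
qed

lemma fs_conv: "fs a \<Longrightarrow> fs b \<Longrightarrow> fs (conv_l1 (a::'g::group_add \<Rightarrow> real) b)"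
  by (rule finite_subset[OF supp_conv]) auto



definition nr :: "('g \<Rightarrow> real) \<Rightarrow> real" where "nr a = (\<Sum>t\<in>supp a. \<bar>a t\<bar>)"

lemma nr_nonneg: "nr a \<ge> 0" by (simp add: nr_def sum_nonneg)

lemma nr_superset: "finite S \<Longrightarrow> supp a \<subseteq> S \<Longrightarrow> (\<Sum>t\<in>S. \<bar>a t\<bar>) = nr a"
  unfolding nr_def by (rule sum.mono_neutral_right) (auto simp: supp_def)

lemma nr_ge_sum:
  assumes "fs a" "finite T"
  shows "(\<Sum>t\<in>T. \<bar>a t\<bar>) \<le> nr a"
proof -
  have "(\<Sum>t\<in>T. \<bar>a t\<bar>) \<le> (\<Sum>t\<in>T \<union> supp a. \<bar>a t\<bar>)"
    by (rule sum_mono2) (use assms in auto)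
  also have "\<dots> = nr a" by (rule nr_superset) (use assms in auto)
  finally show ?thesis .
qed

lemma abs_le_nr: "fs a \<Longrightarrow> \<bar>a t\<bar> \<le> nr a"
  using nr_ge_sum[of a "{t}"] by simp

lemma nr_delta: "nr (delta_e :: 'g::group_add \<Rightarrow> real) = 1"
  by (simp add: nr_def supp_delta delta_e_def)

lemma nr_zero: "nr (\<lambda>_. 0) = 0" by (simp add: nr_def supp_def)

lemma nr_scale: "nr (\<lambda>t. c * a t) = \<bar>c\<bar> * nr a"
proof (cases "c = 0")
  case True thus ?thesis by (simp add: nr_zero)
next
  case False
  hence "supp (\<lambda>t. c * a t) = supp a" by (auto simp: supp_def)
  thus ?thesis by (simp add: nr_def abs_mult sum_distrib_left)
qed

lemma nr_div: "nr (\<lambda>t. a t / c) = nr a / \<bar>c\<bar>"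
  using nr_scale[of "1/c" a] by (simp add: field_simps)

lemma fs_scale: "fs a \<Longrightarrow> fs (\<lambda>t. c * a t)"
  by (rule finite_subset[of _ "supp a"]) (auto simp: supp_def)

lemma fs_div: "fs a \<Longrightarrow> fs (\<lambda>t. a t / c)"
  by (rule finite_subset[of _ "supp a"]) (auto simp: supp_def)

lemma fs_diff: "fs a \<Longrightarrow> fs b \<Longrightarrow> fs (\<lambda>t. a t - b t)"
  by (rule finite_subset[OF supp_diff]) auto

lemma fs_sum: "finite I \<Longrightarrow> (\<And>j. j \<in> I \<Longrightarrow> fs (b j)) \<Longrightarrow> fs (\<lambda>t. \<Sum>j\<in>I. b j t)"
  by (rule finite_subset[OF supp_sum]) auto

lemma fs_delta: "fs (delta_e :: 'g::group_add \<Rightarrow> real)" by (simp add: supp_delta)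

lemma nr_sum:
  assumes "finite I" "\<And>j. j \<in> I \<Longrightarrow> fs (b j)"
  shows "nr (\<lambda>t. \<Sum>j\<in>I. b j t) \<le> (\<Sum>j\<in>I. nr (b j))"
proof -
  let ?S = "\<Union>j\<in>I. supp (b j)"
  have fin: "finite ?S" using assms by auto
  have "nr (\<lambda>t. \<Sum>j\<in>I. b j t) = (\<Sum>t\<in>?S. \<bar>\<Sum>j\<in>I. b j t\<bar>)"
    by (rule nr_superset[symmetric, OF fin supp_sum])
  also have "\<dots> \<le> (\<Sum>t\<in>?S. \<Sum>j\<in>I. \<bar>b j t\<bar>)"
    by (rule sum_mono) (rule sum_abs)
  also have "\<dots> = (\<Sum>j\<in>I. \<Sum>t\<in>?S. \<bar>b j t\<bar>)" by (rule sum.swap)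
  also have "\<dots> = (\<Sum>j\<in>I. nr (b j))"
    by (rule sum.cong[OF refl], rule nr_superset[OF fin]) auto
  finally show ?thesis .
qed

lemma nr_diff: "fs a \<Longrightarrow> fs b \<Longrightarrow> nr (\<lambda>t. a t - b t) \<le> nr a + nr b"
proof -
  assume fa: "fs a" and fb: "fs b"
  have fin: "finite (supp a \<union> supp b)" using fa fb by auto
  have "nr (\<lambda>t. a t - b t) = (\<Sum>t\<in>supp a \<union> supp b. \<bar>a t - b t\<bar>)"
    by (rule nr_superset[symmetric, OF fin supp_diff])
  also have "\<dots> \<le> (\<Sum>t\<in>supp a \<union> supp b. \<bar>a t\<bar> + \<bar>b t\<bar>)"
    by (rule sum_mono) (rule abs_triangle_ineq4)
  also have "\<dots> = nr a + nr b"
    by (simp add: sum.distrib nr_superset[OF fin])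
  finally show ?thesis .
qed

lemma sum_shift_le:
  fixes a :: "'g::group_add \<Rightarrow> real"
  assumes "fs a" "finite U"
  shows "(\<Sum>t\<in>U. \<bar>a (t - s)\<bar>) \<le> nr a"
proof -
  have inj: "inj_on (\<lambda>t. t - s) U" by (auto intro: inj_onI)
  have "(\<Sum>t\<in>U. \<bar>a (t - s)\<bar>) = (\<Sum>u\<in>(\<lambda>t. t - s) ` U. \<bar>a u\<bar>)"
    by (subst sum.reindex[OF inj]) (simp add: o_def)
  also have "\<dots> \<le> nr a" by (rule nr_ge_sum) (use assms in auto)
  finally show ?thesis .
qed

lemma nr_conv:
  fixes a b :: "'g::group_add \<Rightarrow> real"
  assumes fa: "fs a" and fb: "fs b"
  shows "nr (conv_l1 a b) \<le> nr a * nr b"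
proof -
  let ?U = "(\<lambda>(u,s). u + s) ` (supp a \<times> supp b)"
  have fin: "finite ?U" using assms by auto
  have "nr (conv_l1 a b) = (\<Sum>t\<in>?U. \<bar>conv_l1 a b t\<bar>)"
    by (rule nr_superset[symmetric, OF fin supp_conv[OF fa fb]])
  also have "\<dots> = (\<Sum>t\<in>?U. \<bar>\<Sum>s\<in>supp b. a (t - s) * b s\<bar>)"
    by (simp add: conv_right[OF fb order_refl])
  also have "\<dots> \<le> (\<Sum>t\<in>?U. \<Sum>s\<in>supp b. \<bar>a (t - s) * b s\<bar>)"
    by (rule sum_mono, rule sum_abs)
  also have "\<dots> = (\<Sum>t\<in>?U. \<Sum>s\<in>supp b. \<bar>a (t - s)\<bar> * \<bar>b s\<bar>)"
    by (simp add: abs_mult)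
  also have "\<dots> = (\<Sum>s\<in>supp b. \<bar>b s\<bar> * (\<Sum>t\<in>?U. \<bar>a (t - s)\<bar>))"
    by (subst sum.swap) (simp add: sum_distrib_left mult.commute)
  also have "\<dots> \<le> (\<Sum>s\<in>supp b. \<bar>b s\<bar> * nr a)"
    by (rule sum_mono, rule mult_left_mono) (use sum_shift_le[OF fa fin] in auto)
  also have "\<dots> = nr a * nr b"
    unfolding nr_def[of b] sum_distrib_right[symmetric] by (rule mult.commute)
  finally show ?thesis .
qed

lemma conv_bound:
  fixes F b :: "'g::group_add \<Rightarrow> real"
  assumes "\<And>u. \<bar>F u\<bar> \<le> C" "fs b"
  shows "\<bar>conv_l1 F b t\<bar> \<le> C * nr b"
proof -
  have "\<bar>conv_l1 F b t\<bar> = \<bar>\<Sum>s\<in>supp b. F (t - s) * b s\<bar>"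
    by (simp add: conv_right[OF assms(2) order_refl])
  also have "\<dots> \<le> (\<Sum>s\<in>supp b. \<bar>F (t - s) * b s\<bar>)"
    by (rule sum_abs)
  also have "\<dots> = (\<Sum>s\<in>supp b. \<bar>F (t - s)\<bar> * \<bar>b s\<bar>)"
    by (simp add: abs_mult)
  also have "\<dots> \<le> (\<Sum>s\<in>supp b. C * \<bar>b s\<bar>)"
    by (rule sum_mono, rule mult_right_mono) (use assms in auto)
  also have "\<dots> = C * nr b" by (simp add: nr_def sum_distrib_left)
  finally show ?thesis .
qed



lemma diff_add_swap_g: "t - (u + s) = t - s - (u::'g::group_add)"
  by (simp only: diff_conv_add_uminus minus_add add.assoc)

lemma add_diff_assoc_g: "- u + (t - s) = (- u + t) - (s::'g::group_add)"
  by (simp only: diff_conv_add_uminus add.assoc)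

lemma conv_assocA:
  fixes x y z :: "'g::group_add \<Rightarrow> real"
  assumes fy: "fs y" and fz: "fs z"
  shows "conv_l1 (conv_l1 x y) z t = conv_l1 x (conv_l1 y z) t"
proof -
  let ?U = "(\<lambda>(u,s). u + s) ` (supp y \<times> supp z)"
  have finU: "finite ?U" by (intro finite_imageI finite_cartesian_product fy fz)
  have inner: "(\<Sum>v\<in>?U. x (t - v) * y (v - s)) = conv_l1 x y (t - s)" if s: "s \<in> supp z" for s
  proof -
    have inj: "inj_on (\<lambda>u. u + s) (supp y)" by (auto intro: inj_onI)
    have sub: "(\<lambda>u. u + s) ` supp y \<subseteq> ?U"
    proof
      fix v assume "v \<in> (\<lambda>u. u + s) ` supp y"
      then obtain u where u: "u \<in> supp y" "v = u + s" by blast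
      have "(u, s) \<in> supp y \<times> supp z" using u s by blast
      moreover have "v = (\<lambda>(u,s). u + s) (u, s)" using u by simp
      ultimately show "v \<in> ?U" by (rule rev_image_eqI)
    qed
    have "(\<Sum>v\<in>?U. x (t - v) * y (v - s)) = (\<Sum>v\<in>(\<lambda>u. u + s) ` supp y. x (t - v) * y (v - s))"
    proof (rule sum.mono_neutral_right[OF finU sub])
      show "\<forall>v\<in>?U - (\<lambda>u. u + s) ` supp y. x (t - v) * y (v - s) = 0"
      proof
        fix v assume "v \<in> ?U - (\<lambda>u. u + s) ` supp y"
        hence "v \<notin> (\<lambda>u. u + s) ` supp y" by blast
        moreover have "v = (v - s) + s" by simp
        ultimately have "v - s \<notin> supp y" by (metis image_eqI)
        thus "x (t - v) * y (v - s) = 0" by (simp add: supp_def)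
      qed
    qed
    also have "\<dots> = (\<Sum>u\<in>supp y. x (t - (u + s)) * y (u + s - s))"
      by (subst sum.reindex[OF inj]) (simp only: o_def)
    also have "\<dots> = (\<Sum>u\<in>supp y. x (t - s - u) * y u)"
      by (simp only: diff_add_swap_g add_diff_cancel)
    also have "\<dots> = conv_l1 x y (t - s)" by (rule conv_right[OF fy order_refl, symmetric])
    finally show ?thesis .
  qed
  have "conv_l1 x (conv_l1 y z) t = (\<Sum>v\<in>?U. x (t - v) * conv_l1 y z v)"
    by (rule conv_right[OF finU supp_conv[OF fy fz]])
  also have "\<dots> = (\<Sum>v\<in>?U. x (t - v) * (\<Sum>s\<in>supp z. y (v - s) * z s))"
    by (simp only: conv_right[OF fz order_refl])
  also have "\<dots> = (\<Sum>v\<in>?U. \<Sum>s\<in>supp z. x (t - v) * y (v - s) * z s)"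
    by (simp only: sum_distrib_left mult.assoc)
  also have "\<dots> = (\<Sum>s\<in>supp z. \<Sum>v\<in>?U. x (t - v) * y (v - s) * z s)"
    by (rule sum.swap)
  also have "\<dots> = (\<Sum>s\<in>supp z. (\<Sum>v\<in>?U. x (t - v) * y (v - s)) * z s)"
    by (simp only: sum_distrib_right)
  also have "\<dots> = (\<Sum>s\<in>supp z. conv_l1 x y (t - s) * z s)"
    by (rule sum.cong[OF refl]) (simp add: inner)
  also have "\<dots> = conv_l1 (conv_l1 x y) z t"
    by (rule conv_right[OF fz order_refl, symmetric])
  finally show ?thesis by simp
qed

lemma conv_assocB:
  fixes x y z :: "'g::group_add \<Rightarrow> real"
  assumes fx: "fs x" and fz: "fs z"
  shows "conv_l1 (conv_l1 x y) z t = conv_l1 x (conv_l1 y z) t"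
proof -
  have "conv_l1 (conv_l1 x y) z t = (\<Sum>s\<in>supp z. conv_l1 x y (t - s) * z s)"
    by (rule conv_right[OF fz order_refl])
  also have "\<dots> = (\<Sum>s\<in>supp z. (\<Sum>u\<in>supp x. x u * y (- u + (t - s))) * z s)"
    by (simp only: conv_left[OF fx order_refl])
  also have "\<dots> = (\<Sum>s\<in>supp z. \<Sum>u\<in>supp x. x u * (y (- u + t - s) * z s))"
    by (simp only: sum_distrib_right mult.assoc add_diff_assoc_g)
  also have "\<dots> = (\<Sum>u\<in>supp x. \<Sum>s\<in>supp z. x u * (y (- u + t - s) * z s))"
    by (rule sum.swap)
  also have "\<dots> = (\<Sum>u\<in>supp x. x u * (\<Sum>s\<in>supp z. y (- u + t - s) * z s))"
    by (simp only: sum_distrib_left)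
  also have "\<dots> = (\<Sum>u\<in>supp x. x u * conv_l1 y z (- u + t))"
    by (simp only: conv_right[OF fz order_refl])
  also have "\<dots> = conv_l1 x (conv_l1 y z) t"
    by (rule conv_left[OF fx order_refl, symmetric])
  finally show ?thesis .
qed

lemma conv_sum_right':
  fixes a :: "'g::group_add \<Rightarrow> real"
  assumes "fs a"
  shows "conv_l1 a (\<lambda>t. \<Sum>j\<in>I. b j t) t = (\<Sum>j\<in>I. conv_l1 a (b j) t)"
proof -
  have "conv_l1 a (\<lambda>t. \<Sum>j\<in>I. b j t) t = (\<Sum>u\<in>supp a. a u * (\<Sum>j\<in>I. b j (- u + t)))"
    by (rule conv_left[OF assms order_refl])
  also have "\<dots> = (\<Sum>u\<in>supp a. \<Sum>j\<in>I. a u * b j (- u + t))"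
    by (simp only: sum_distrib_left)
  also have "\<dots> = (\<Sum>j\<in>I. \<Sum>u\<in>supp a. a u * b j (- u + t))"
    by (rule sum.swap)
  also have "\<dots> = (\<Sum>j\<in>I. conv_l1 a (b j) t)"
    by (simp only: conv_left[OF assms order_refl])
  finally show ?thesis .
qed

definition finM :: "nat \<Rightarrow> (nat \<Rightarrow> nat \<Rightarrow> 'g \<Rightarrow> real) \<Rightarrow> bool" where
  "finM n X \<longleftrightarrow> (\<forall>i<n. \<forall>k<n. fs (X i k))"

lemma finM_mul: "finM n X \<Longrightarrow> finM n Y \<Longrightarrow> finM n (mat_mul_l1 n X (Y::nat \<Rightarrow> nat \<Rightarrow> 'g::group_add \<Rightarrow> real))"
  unfolding finM_def mat_mul_l1_def by (auto intro!: fs_sum fs_conv)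

lemma mat_assocA:
  fixes X Y Z :: "nat \<Rightarrow> nat \<Rightarrow> 'g::group_add \<Rightarrow> real"
  assumes "finM n Y" "finM n Z" "k < n"
  shows "mat_mul_l1 n (mat_mul_l1 n X Y) Z i k t = mat_mul_l1 n X (mat_mul_l1 n Y Z) i k t"
proof -
  have fY: "\<And>j m. j < n \<Longrightarrow> m < n \<Longrightarrow> fs (Y j m)" and fZ: "\<And>m. m < n \<Longrightarrow> fs (Z m k)"
    using assms unfolding finM_def by auto
  have "mat_mul_l1 n (mat_mul_l1 n X Y) Z i k t
      = (\<Sum>m<n. \<Sum>j<n. conv_l1 (conv_l1 (X i j) (Y j m)) (Z m k) t)"
    unfolding mat_mul_l1_def by (rule sum.cong[OF refl], rule conv_sum_left) (auto intro: fZ)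
  also have "\<dots> = (\<Sum>j<n. \<Sum>m<n. conv_l1 (conv_l1 (X i j) (Y j m)) (Z m k) t)"
    by (rule sum.swap)
  also have "\<dots> = (\<Sum>j<n. \<Sum>m<n. conv_l1 (X i j) (conv_l1 (Y j m) (Z m k)) t)"
    by (intro sum.cong refl conv_assocA fY fZ) auto
  also have "\<dots> = mat_mul_l1 n X (mat_mul_l1 n Y Z) i k t"
    unfolding mat_mul_l1_def
    by (rule sum.cong[OF refl], rule conv_sum_right[symmetric]) (auto intro!: fs_conv fY fZ)
  finally show ?thesis .
qed

lemma mat_assocB:
  fixes X Y Z :: "nat \<Rightarrow> nat \<Rightarrow> 'g::group_add \<Rightarrow> real"
  assumes "\<And>j. j < n \<Longrightarrow> fs (X i j)" "finM n Z" "k < n"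
  shows "mat_mul_l1 n (mat_mul_l1 n X Y) Z i k t = mat_mul_l1 n X (mat_mul_l1 n Y Z) i k t"
proof -
  have fZ: "\<And>m. m < n \<Longrightarrow> fs (Z m k)"
    using assms unfolding finM_def by auto
  have "mat_mul_l1 n (mat_mul_l1 n X Y) Z i k t
      = (\<Sum>m<n. \<Sum>j<n. conv_l1 (conv_l1 (X i j) (Y j m)) (Z m k) t)"
    unfolding mat_mul_l1_def by (rule sum.cong[OF refl], rule conv_sum_left) (auto intro: fZ)
  also have "\<dots> = (\<Sum>j<n. \<Sum>m<n. conv_l1 (conv_l1 (X i j) (Y j m)) (Z m k) t)"
    by (rule sum.swap)
  also have "\<dots> = (\<Sum>j<n. \<Sum>m<n. conv_l1 (X i j) (conv_l1 (Y j m) (Z m k)) t)"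
    by (intro sum.cong refl conv_assocB assms fZ) auto
  also have "\<dots> = mat_mul_l1 n X (mat_mul_l1 n Y Z) i k t"
    unfolding mat_mul_l1_def
    by (rule sum.cong[OF refl], rule conv_sum_right'[symmetric]) (auto intro!: assms)
  finally show ?thesis .
qed

lemma mat_mul_cong:
  assumes "\<And>j. j < n \<Longrightarrow> X i j = X' i j" "\<And>j. j < n \<Longrightarrow> Y j k = Y' j k"
  shows "mat_mul_l1 n X Y i k = mat_mul_l1 n X' Y' i k"
  unfolding mat_mul_l1_def using assms by simp

lemma mat_mul_lim_right:
  fixes Y :: "nat \<Rightarrow> nat \<Rightarrow> 'g::group_add \<Rightarrow> real"
  assumes fY: "\<And>j. j < n \<Longrightarrow> fs (Y i j)"
    and lim: "\<And>j u. j < n \<Longrightarrow> (\<lambda>N. Xs N j k u) \<longlonglongrightarrow> X j k u"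
  shows "(\<lambda>N. mat_mul_l1 n Y (Xs N) i k t) \<longlonglongrightarrow> mat_mul_l1 n Y X i k t"
proof -
  have "(\<lambda>N. conv_l1 (Y i j) (Xs N j k) t) \<longlonglongrightarrow> conv_l1 (Y i j) (X j k) t" if j: "j < n" for j
    unfolding conv_left[OF fY[OF j] order_refl] by (intro tendsto_intros lim j)
  thus ?thesis unfolding mat_mul_l1_def by (auto intro!: tendsto_sum)
qed

lemma mat_mul_lim_left:
  fixes Y :: "nat \<Rightarrow> nat \<Rightarrow> 'g::group_add \<Rightarrow> real"
  assumes fY: "\<And>j. j < n \<Longrightarrow> fs (Y j k)"
    and lim: "\<And>j u. j < n \<Longrightarrow> (\<lambda>N. Xs N i j u) \<longlonglongrightarrow> X i j u"
  shows "(\<lambda>N. mat_mul_l1 n (Xs N) Y i k t) \<longlonglongrightarrow> mat_mul_l1 n X Y i k t"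
proof -
  have "(\<lambda>N. conv_l1 (Xs N i j) (Y j k) t) \<longlonglongrightarrow> conv_l1 (X i j) (Y j k) t" if j: "j < n" for j
    unfolding conv_right[OF fY[OF j] order_refl] by (intro tendsto_intros lim j)
  thus ?thesis unfolding mat_mul_l1_def by (auto intro!: tendsto_sum)
qed



lemma of_int_delta: "real_of_int (delta_e t) = (delta_e t :: real)"
  by (simp add: delta_e_def)

definition IdM :: "nat \<Rightarrow> nat \<Rightarrow> 'g::group_add \<Rightarrow> real" where
  "IdM i k = (if i = k then delta_e else (\<lambda>_. 0))"

lemma fs_IdM: "fs (IdM i k)"
proof (cases "i = k")
  case True thus ?thesis by (simp add: IdM_def supp_delta)
next
  case False thus ?thesis by (simp add: IdM_def supp_def)
qed

lemma finM_IdM: "finM n IdM" by (simp add: finM_def fs_IdM)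

lemma mat_mul_IdM_right:
  assumes "k < n"
  shows "mat_mul_l1 n X IdM i k = X i k"
proof
  fix t
  have "mat_mul_l1 n X IdM i k t = (\<Sum>m<n. if m = k then X i m t else 0)"
    unfolding mat_mul_l1_def IdM_def
    by (rule sum.cong[OF refl]) (simp add: conv_delta_right1 conv_zero_right)
  also have "\<dots> = X i k t" using assms by simp
  finally show "mat_mul_l1 n X IdM i k t = X i k t" .
qed

lemma mat_mul_IdM_left:
  assumes "i < n"
  shows "mat_mul_l1 n IdM X i k = X i k"
proof
  fix t
  have "mat_mul_l1 n IdM X i k t = (\<Sum>m<n. if i = m then X m k t else 0)"
    unfolding mat_mul_l1_def IdM_def
    by (rule sum.cong[OF refl]) (simp add: conv_delta_left1 conv_zero_left)
  also have "\<dots> = X i k t" using assms by simp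
  finally show "mat_mul_l1 n IdM X i k t = X i k t" .
qed

locale Lc =
  fixes n :: nat and M :: "nat \<Rightarrow> int" and g :: "nat \<Rightarrow> nat \<Rightarrow> 'g::group_add \<Rightarrow> int"
  assumes npos: "n > 0"
    and gfin: "\<forall>m<n. \<forall>k<n. in_ZG (g m k)"
    and Mpos: "\<forall>k<n. M k > 0"
    and Mbig: "\<forall>k<n. M k > (\<Sum>m<n. norm1_ZG (g m k))"
begin

definition gr :: "nat \<Rightarrow> nat \<Rightarrow> 'g \<Rightarrow> real" where "gr i k t = real_of_int (g i k t)"
definition GD :: "nat \<Rightarrow> nat \<Rightarrow> 'g \<Rightarrow> real" where "GD i k t = gr i k t / real_of_int (M k)"
definition Rm :: "nat \<Rightarrow> nat \<Rightarrow> 'g \<Rightarrow> real" where "Rm = to_real_mat (fmat M g)"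
primrec Q :: "nat \<Rightarrow> nat \<Rightarrow> nat \<Rightarrow> 'g \<Rightarrow> real" where
  "Q 0 = IdM" | "Q (Suc j) = mat_mul_l1 n GD (Q j)"
definition A :: "nat \<Rightarrow> nat \<Rightarrow> nat \<Rightarrow> 'g \<Rightarrow> real" where "A j i k t = Q j i k t / real_of_int (M i)"
definition S :: "nat \<Rightarrow> nat \<Rightarrow> nat \<Rightarrow> 'g \<Rightarrow> real" where "S N i k t = (\<Sum>j<N. A j i k t)"
definition F0 :: "nat \<Rightarrow> nat \<Rightarrow> 'g \<Rightarrow> real" where
  "F0 i k t = (if i < n \<and> k < n then (\<Sum>j. A j i k t) else 0)"
definition q :: real where "q = Max ((\<lambda>m. (\<Sum>i<n. nr (gr i m)) / real_of_int (M m)) ` {..<n})"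

lemma supp_gr: "supp (gr i k) = supp (g i k)" by (auto simp: supp_def gr_def)

lemma fs_gr: "i < n \<Longrightarrow> k < n \<Longrightarrow> fs (gr i k)"
  using gfin by (simp add: supp_gr in_ZG_def)

lemma nr_gr: "nr (gr i k) = real_of_int (norm1_ZG (g i k))"
  by (simp add: nr_def supp_gr norm1_ZG_def gr_def)

lemma M_ge1: "k < n \<Longrightarrow> real_of_int (M k) \<ge> 1"
  using Mpos by (simp add: int_one_le_iff_zero_less)

lemma M_pos: "k < n \<Longrightarrow> real_of_int (M k) > 0"
  using M_ge1[of k] by linarith

lemma absM: "k < n \<Longrightarrow> \<bar>real_of_int (M k)\<bar> = real_of_int (M k)"
  using M_pos[of k] by simp

lemma col_lt: "m < n \<Longrightarrow> (\<Sum>i<n. nr (gr i m)) / real_of_int (M m) < 1"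
proof -
  assume m: "m < n"
  have h: "(\<Sum>i<n. norm1_ZG (g i m)) < M m" using Mbig m by blast
  have "(\<Sum>i<n. nr (gr i m)) = real_of_int (\<Sum>i<n. norm1_ZG (g i m))" by (simp add: nr_gr)
  hence "(\<Sum>i<n. nr (gr i m)) < real_of_int (M m)" using h by (metis of_int_less_iff)
  thus ?thesis using M_pos[OF m] by simp
qed

lemma q_lt1: "q < 1"
  unfolding q_def using npos col_lt by (subst Max_less_iff) auto

lemma col_le_q: "m < n \<Longrightarrow> (\<Sum>i<n. nr (gr i m)) / real_of_int (M m) \<le> q"
  unfolding q_def by (rule Max_ge) auto

lemma q_nonneg: "q \<ge> 0"
proof -
  have "0 \<le> (\<Sum>i<n. nr (gr i 0)) / real_of_int (M 0)"
    using M_pos[OF npos] by (simp add: sum_nonneg nr_nonneg)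
  also have "\<dots> \<le> q" using col_le_q npos by blast
  finally show ?thesis .
qed

lemma col_le_q': "m < n \<Longrightarrow> (\<Sum>i<n. nr (gr i m) / real_of_int (M m)) \<le> q"
  using col_le_q by (simp add: sum_divide_distrib)

lemma finM_GD: "finM n GD"
  unfolding finM_def GD_def[abs_def] by (auto intro!: fs_div fs_gr)

lemma GD_fun: "GD i k = (\<lambda>t. gr i k t / real_of_int (M k))" by (simp add: GD_def[abs_def])

lemma finM_Q: "finM n (Q j)"
  by (induction j) (auto intro: finM_mul finM_GD finM_IdM)

lemma fs_Q: "i < n \<Longrightarrow> k < n \<Longrightarrow> fs (Q j i k)"
  using finM_Q unfolding finM_def by blast

lemma A_fun: "A j i k = (\<lambda>t. Q j i k t / real_of_int (M i))" by (simp add: A_def[abs_def])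

lemma fs_A: "i < n \<Longrightarrow> k < n \<Longrightarrow> fs (A j i k)"
  by (simp add: A_fun fs_div fs_Q)

lemma finM_A: "finM n (A j)" by (simp add: finM_def fs_A)

lemma S_fun: "S N i k = (\<lambda>t. \<Sum>j<N. A j i k t)" by (simp add: S_def[abs_def])

lemma finM_S: "finM n (S N)" unfolding finM_def S_fun by (auto intro!: fs_sum fs_A)

lemma Rm_fun: "Rm i m = (\<lambda>t. (if i = m then real_of_int (M m) * delta_e t else 0) - gr i m t)"
  by (auto simp: Rm_def to_real_mat_def fmat_def gr_def of_int_delta)

lemma fs_Rm: "i < n \<Longrightarrow> m < n \<Longrightarrow> fs (Rm i m)"
  unfolding Rm_fun by (intro fs_diff fs_gr) (auto simp: supp_def delta_e_def)

lemma finM_Rm: "finM n Rm" by (simp add: finM_def fs_Rm)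

lemma colQ: "k < n \<Longrightarrow> (\<Sum>i<n. nr (Q j i k)) \<le> q ^ j"
proof (induction j arbitrary: k)
  case 0
  have "(\<Sum>i<n. nr (Q 0 i k)) = (\<Sum>i<n. if i = k then 1 else 0)"
    by (rule sum.cong) (auto simp: IdM_def nr_delta nr_zero)
  also have "\<dots> = 1" using 0 by simp
  finally show ?case by simp
next
  case (Suc j)
  have "nr (Q (Suc j) i k) \<le> (\<Sum>m<n. nr (gr i m) / real_of_int (M m) * nr (Q j m k))" if i: "i < n" for i
  proof -
    have "nr (Q (Suc j) i k) = nr (\<lambda>t. \<Sum>m<n. conv_l1 (GD i m) (Q j m k) t)"
      by (simp add: mat_mul_l1_def)
    also have "\<dots> \<le> (\<Sum>m<n. nr (conv_l1 (GD i m) (Q j m k)))"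
      by (rule nr_sum) (use i Suc.prems in \<open>auto intro!: fs_conv fs_Q simp: GD_fun fs_div fs_gr\<close>)
    also have "\<dots> \<le> (\<Sum>m<n. nr (GD i m) * nr (Q j m k))"
      by (rule sum_mono, rule nr_conv) (use i Suc.prems in \<open>auto intro!: fs_Q simp: GD_fun fs_div fs_gr\<close>)
    also have "\<dots> = (\<Sum>m<n. nr (gr i m) / real_of_int (M m) * nr (Q j m k))"
      by (rule sum.cong[OF refl]) (simp add: GD_fun nr_div absM)
    finally show ?thesis .
  qed
  hence "(\<Sum>i<n. nr (Q (Suc j) i k)) \<le> (\<Sum>i<n. \<Sum>m<n. nr (gr i m) / real_of_int (M m) * nr (Q j m k))"
    by (intro sum_mono) auto
  also have "\<dots> = (\<Sum>m<n. (\<Sum>i<n. nr (gr i m) / real_of_int (M m)) * nr (Q j m k))"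
    by (subst sum.swap) (simp add: sum_distrib_right)
  also have "\<dots> \<le> (\<Sum>m<n. q * nr (Q j m k))"
    by (rule sum_mono, rule mult_right_mono) (auto simp: col_le_q' nr_nonneg)
  also have "\<dots> = q * (\<Sum>m<n. nr (Q j m k))" by (simp add: sum_distrib_left)
  also have "\<dots> \<le> q * q ^ j"
    by (rule mult_left_mono[OF Suc.IH[OF Suc.prems] q_nonneg])
  finally show ?case by simp
qed

lemma nrQ: "i < n \<Longrightarrow> k < n \<Longrightarrow> nr (Q j i k) \<le> q ^ j"
  using colQ[of k j] member_le_sum[of i "{..<n}" "\<lambda>i. nr (Q j i k)"] nr_nonneg by force

lemma absQ: "i < n \<Longrightarrow> k < n \<Longrightarrow> \<bar>Q j i k t\<bar> \<le> q ^ j"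
  using abs_le_nr[OF fs_Q] nrQ order_trans by blast

lemma nrA: "i < n \<Longrightarrow> k < n \<Longrightarrow> nr (A j i k) \<le> q ^ j"
proof -
  assume i: "i < n" and k: "k < n"
  have "nr (A j i k) = nr (Q j i k) / real_of_int (M i)"
    using M_pos[OF i] by (simp add: A_fun nr_div)
  also have "\<dots> \<le> nr (Q j i k)"
  proof -
    have "nr (Q j i k) * 1 \<le> nr (Q j i k) * real_of_int (M i)"
      by (rule mult_left_mono) (use M_ge1[OF i] nr_nonneg in auto)
    thus ?thesis using M_pos[OF i] by (simp add: divide_le_eq)
  qed
  finally show ?thesis using nrQ[OF i k, of j] by linarith
qed

lemma absA: "i < n \<Longrightarrow> k < n \<Longrightarrow> \<bar>A j i k t\<bar> \<le> q ^ j"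
  using abs_le_nr[OF fs_A] nrA order_trans by blast

lemma summable_q: "summable (\<lambda>j. q ^ j)"
  using q_lt1 q_nonneg by (intro summable_geometric) simp

lemma summable_A: "i < n \<Longrightarrow> k < n \<Longrightarrow> summable (\<lambda>j. A j i k t)"
  by (rule summable_comparison_test[OF _ summable_q]) (auto intro: absA)

lemma summable_absA: "i < n \<Longrightarrow> k < n \<Longrightarrow> summable (\<lambda>j. \<bar>A j i k t\<bar>)"
  by (rule summable_comparison_test[OF _ summable_q]) (auto intro: absA)

lemma S_lim: "i < n \<Longrightarrow> k < n \<Longrightarrow> (\<lambda>N. S N i k t) \<longlonglongrightarrow> F0 i k t"
  unfolding S_def F0_def using summable_LIMSEQ[OF summable_A] by simp

lemma F0_bps:
  assumes "finite T"
  shows "(\<Sum>t\<in>T. \<bar>F0 i k t\<bar>) \<le> 1 / (1 - q)"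
proof (cases "i < n \<and> k < n")
  case False
  hence "\<And>t. F0 i k t = 0" by (auto simp: F0_def)
  thus ?thesis using q_lt1 by simp
next
  case True
  hence i: "i < n" and k: "k < n" by auto
  have "(\<Sum>t\<in>T. \<bar>F0 i k t\<bar>) \<le> (\<Sum>t\<in>T. \<Sum>j. \<bar>A j i k t\<bar>)"
    by (rule sum_mono) (simp add: F0_def i k summable_rabs summable_absA)
  also have "\<dots> = (\<Sum>j. \<Sum>t\<in>T. \<bar>A j i k t\<bar>)"
    by (rule suminf_sum[symmetric]) (simp add: summable_absA i k)
  also have "\<dots> \<le> (\<Sum>j. q ^ j)"
  proof (rule suminf_le)
    show "(\<Sum>t\<in>T. \<bar>A j i k t\<bar>) \<le> q ^ j" for j
      using nr_ge_sum[OF fs_A[OF i k] assms, of j] nrA[OF i k, of j] by linarith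
    show "summable (\<lambda>j. \<Sum>t\<in>T. \<bar>A j i k t\<bar>)"
      by (rule summable_sum) (simp add: summable_absA i k)
  qed (rule summable_q)
  also have "\<dots> = 1 / (1 - q)" using q_lt1 q_nonneg by (intro suminf_geometric) simp
  finally show ?thesis .
qed

lemma F0_l1: "in_l1 (F0 i k)"
  unfolding in_l1_def
proof (rule nonneg_bdd_above_summable_on)
  show "bdd_above (sum (\<lambda>s. \<bar>F0 i k s\<bar>) ` {F. F \<subseteq> UNIV \<and> finite F})"
    by (rule bdd_aboveI[where M="1 / (1 - q)"]) (auto intro: F0_bps)
qed simp

end


context Lc begin

declare Q.simps(2)[simp del]

lemma conv_if_left:
  assumes "fs b"
  shows "conv_l1 (\<lambda>t. if c then r * delta_e t else 0) b t = (if c then r * b t else 0)"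
  by (cases c) (simp_all add: conv_delta_left conv_zero_left)

lemma conv_if_right:
  shows "conv_l1 a (\<lambda>t. if c then r * delta_e t else 0) t = (if c then r * a t else 0)"
  by (cases c) (simp_all add: conv_delta_right conv_zero_right)

lemma fs_if: "fs (\<lambda>t::'g. if c then r * delta_e t else (0::real))"
  by (rule finite_subset[of _ "{0}"]) (auto simp: supp_def delta_e_def)

lemma RA: 
  assumes i: "i < n" and k: "k < n"
  shows "mat_mul_l1 n Rm (A j) i k t = Q j i k t - Q (Suc j) i k t"
proof -
  have "mat_mul_l1 n Rm (A j) i k t
      = (\<Sum>m<n. (if i = m then real_of_int (M m) * A j m k t else 0) - conv_l1 (gr i m) (A j m k) t)"
    unfolding mat_mul_l1_def
    by (rule sum.cong[OF refl]) (simp add: Rm_fun conv_diff_left fs_A k conv_if_left)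
  also have "\<dots> = (\<Sum>m<n. if i = m then real_of_int (M m) * A j m k t else 0)
                 - (\<Sum>m<n. conv_l1 (gr i m) (A j m k) t)"
    by (rule sum_subtractf)
  also have "(\<Sum>m<n. if i = m then real_of_int (M m) * A j m k t else 0) = Q j i k t"
    using i M_pos[OF i] by (simp add: A_def)
  also have "(\<Sum>m<n. conv_l1 (gr i m) (A j m k) t) = Q (Suc j) i k t"
    by (simp add: Q.simps(2) mat_mul_l1_def GD_fun A_fun conv_div_right conv_div_left fs_Q fs_gr k i)
  finally show ?thesis .
qed

lemma RS:
  assumes i: "i < n" and k: "k < n"
  shows "mat_mul_l1 n Rm (S N) i k = (\<lambda>t. IdM i k t - Q N i k t)"
proof
  fix t
  have "mat_mul_l1 n Rm (S N) i k t = (\<Sum>m<n. \<Sum>j<N. conv_l1 (Rm i m) (A j m k) t)"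
    unfolding mat_mul_l1_def S_fun
    by (rule sum.cong[OF refl], rule conv_sum_right) (auto intro: fs_A k)
  also have "\<dots> = (\<Sum>j<N. mat_mul_l1 n Rm (A j) i k t)"
    unfolding mat_mul_l1_def by (rule sum.swap)
  also have "\<dots> = (\<Sum>j<N. Q j i k t - Q (Suc j) i k t)"
    by (simp add: RA i k)
  also have "\<dots> = IdM i k t - Q N i k t"
    by (subst sum_lessThan_telescope') simp
  finally show "mat_mul_l1 n Rm (S N) i k t = IdM i k t - Q N i k t" .
qed

lemma Q_lim0: "i < n \<Longrightarrow> k < n \<Longrightarrow> (\<lambda>N. Q N i k t) \<longlonglongrightarrow> 0"
  by (rule Lim_null_comparison[where g="\<lambda>N. q ^ N"])
     (use q_lt1 q_nonneg absQ in \<open>auto intro!: LIMSEQ_power_zero\<close>)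

lemma RF0:
  assumes i: "i < n" and k: "k < n"
  shows "mat_mul_l1 n Rm F0 i k t = IdM i k t"
proof -
  have l1: "(\<lambda>N. mat_mul_l1 n Rm (S N) i k t) \<longlonglongrightarrow> mat_mul_l1 n Rm F0 i k t"
    by (rule mat_mul_lim_right) (auto intro: fs_Rm i S_lim k)
  have "(\<lambda>N. mat_mul_l1 n Rm (S N) i k t) \<longlonglongrightarrow> IdM i k t - 0"
    unfolding RS[OF i k] by (intro tendsto_intros Q_lim0 i k)
  with l1 show ?thesis using LIMSEQ_unique by fastforce
qed

lemma Q_commute: "i < n \<Longrightarrow> k < n \<Longrightarrow> Q (Suc j) i k = mat_mul_l1 n (Q j) GD i k"
proof (induction j arbitrary: i k)
  case 0
  thus ?case by (simp add: Q.simps(2) mat_mul_IdM_right mat_mul_IdM_left)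
next
  case (Suc j)
  have "Q (Suc (Suc j)) i k = mat_mul_l1 n GD (Q (Suc j)) i k" by (simp add: Q.simps(2))
  also have "\<dots> = mat_mul_l1 n GD (mat_mul_l1 n (Q j) GD) i k"
    using Suc.prems by (intro mat_mul_cong refl Suc.IH) auto
  also have "\<dots> = mat_mul_l1 n (mat_mul_l1 n GD (Q j)) GD i k"
    by (rule ext, rule mat_assocA[symmetric]) (auto intro: finM_Q finM_GD Suc.prems)
  also have "\<dots> = mat_mul_l1 n (Q (Suc j)) GD i k" by (simp add: Q.simps(2))
  finally show ?case .
qed

lemma AR:
  assumes i: "i < n" and k: "k < n"
  shows "mat_mul_l1 n (A j) Rm i k t
    = real_of_int (M k) / real_of_int (M i) * (Q j i k t - Q (Suc j) i k t)"
proof -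
  have "mat_mul_l1 n (A j) Rm i k t
      = (\<Sum>m<n. (if m = k then real_of_int (M k) * A j i m t else 0) - conv_l1 (A j i m) (gr m k) t)"
    unfolding mat_mul_l1_def
    by (rule sum.cong[OF refl])
       (simp add: Rm_fun conv_diff_right fs_if fs_gr k conv_if_right)
  also have "\<dots> = (\<Sum>m<n. if m = k then real_of_int (M k) * A j i m t else 0)
                 - (\<Sum>m<n. conv_l1 (A j i m) (gr m k) t)"
    by (rule sum_subtractf)
  also have "(\<Sum>m<n. if m = k then real_of_int (M k) * A j i m t else 0)
      = real_of_int (M k) * Q j i k t / real_of_int (M i)"
    using k by (simp add: A_def)
  also have "(\<Sum>m<n. conv_l1 (A j i m) (gr m k) t)
      = real_of_int (M k) * Q (Suc j) i k t / real_of_int (M i)"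
  proof -
    have "Q (Suc j) i k t = (\<Sum>m<n. conv_l1 (Q j i m) (gr m k) t) / real_of_int (M k)"
      unfolding Q_commute[OF i k] mat_mul_l1_def
      by (simp add: GD_fun conv_div_right fs_gr k sum_divide_distrib)
    moreover have "(\<Sum>m<n. conv_l1 (A j i m) (gr m k) t)
        = (\<Sum>m<n. conv_l1 (Q j i m) (gr m k) t) / real_of_int (M i)"
      by (simp add: A_fun conv_div_left fs_gr k sum_divide_distrib)
    ultimately show ?thesis using M_pos[OF k] by simp
  qed
  also have "real_of_int (M k) * Q j i k t / real_of_int (M i) - real_of_int (M k) * Q (Suc j) i k t / real_of_int (M i)
     = real_of_int (M k) / real_of_int (M i) * (Q j i k t - Q (Suc j) i k t)"
    by (simp add: right_diff_distrib)
  finally show ?thesis .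
qed

lemma SR:
  assumes i: "i < n" and k: "k < n"
  shows "mat_mul_l1 n (S N) Rm i k t
    = IdM i k t - real_of_int (M k) / real_of_int (M i) * Q N i k t"
proof -
  have "mat_mul_l1 n (S N) Rm i k t = (\<Sum>m<n. \<Sum>j<N. conv_l1 (A j i m) (Rm m k) t)"
    unfolding mat_mul_l1_def S_fun
    by (rule sum.cong[OF refl], rule conv_sum_left) (auto intro: fs_Rm k)
  also have "\<dots> = (\<Sum>j<N. mat_mul_l1 n (A j) Rm i k t)"
    unfolding mat_mul_l1_def by (rule sum.swap)
  also have "\<dots> = (\<Sum>j<N. real_of_int (M k) / real_of_int (M i) * (Q j i k t - Q (Suc j) i k t))"
    by (simp add: AR i k)
  also have "\<dots> = real_of_int (M k) / real_of_int (M i) * (\<Sum>j<N. Q j i k t - Q (Suc j) i k t)"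
    by (rule sum_distrib_left[symmetric])
  also have "\<dots> = real_of_int (M k) / real_of_int (M i) * (IdM i k t - Q N i k t)"
    using sum_lessThan_telescope'[of "\<lambda>j. Q j i k t" N] by simp
  also have "\<dots> = IdM i k t - real_of_int (M k) / real_of_int (M i) * Q N i k t"
    by (cases "i = k") (use M_pos[OF i] in \<open>auto simp: IdM_def right_diff_distrib\<close>)
  finally show ?thesis .
qed

lemma F0R:
  assumes i: "i < n" and k: "k < n"
  shows "mat_mul_l1 n F0 Rm i k t = IdM i k t"
proof -
  have l1: "(\<lambda>N. mat_mul_l1 n (S N) Rm i k t) \<longlonglongrightarrow> mat_mul_l1 n F0 Rm i k t"
    by (rule mat_mul_lim_left) (auto intro: fs_Rm k S_lim i)
  have "(\<lambda>N. mat_mul_l1 n (S N) Rm i k t)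
      \<longlonglongrightarrow> IdM i k t - real_of_int (M k) / real_of_int (M i) * 0"
    unfolding SR[OF i k] by (intro tendsto_intros Q_lim0 i k)
  with l1 show ?thesis using LIMSEQ_unique by fastforce
qed

lemma l1_bounded:
  assumes "in_l1 (a :: 'g \<Rightarrow> real)"
  shows "\<bar>a u\<bar> \<le> infsum (\<lambda>s. \<bar>a s\<bar>) UNIV"
proof -
  have "sum (\<lambda>s. \<bar>a s\<bar>) {u} \<le> infsum (\<lambda>s. \<bar>a s\<bar>) UNIV"
    by (rule finite_sum_le_infsum) (use assms in \<open>auto simp: in_l1_def\<close>)
  thus ?thesis by simp
qed

lemma uniq:
  assumes z: "\<forall>i j. (n \<le> i \<or> n \<le> j) \<longrightarrow> F i j = (\<lambda>_. 0)"
    and l1: "\<forall>i<n. \<forall>j<n. in_l1 (F i j)"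
    and inv: "\<forall>i<n. \<forall>k<n. mat_mul_l1 n F Rm i k = IdM i k"
  shows "F = F0"
proof (intro ext)
  fix i k t
  show "F i k t = F0 i k t"
  proof (cases "i < n \<and> k < n")
    case False
    thus ?thesis using z by (auto simp: F0_def)
  next
    case True
    hence i: "i < n" and k: "k < n" by auto
    define C where "C = (\<Sum>m<n. infsum (\<lambda>s. \<bar>F i m s\<bar>) UNIV)"
    have bnd: "\<bar>F i m u\<bar> \<le> C" if m: "m < n" for m u
    proof -
      have "\<bar>F i m u\<bar> \<le> infsum (\<lambda>s. \<bar>F i m s\<bar>) UNIV" using l1 i m by (blast intro: l1_bounded)
      also have "\<dots> \<le> C" unfolding C_def
        by (rule member_le_sum) (auto intro: infsum_nonneg m)
      finally show ?thesis .
    qed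
    have C0: "C \<ge> 0" unfolding C_def by (auto intro!: sum_nonneg infsum_nonneg)
    have eq: "S N i k t = F i k t - (\<Sum>m<n. conv_l1 (F i m) (Q N m k) t)" for N
    proof -
      have "mat_mul_l1 n (mat_mul_l1 n F Rm) (S N) i k t = mat_mul_l1 n F (mat_mul_l1 n Rm (S N)) i k t"
        by (rule mat_assocA) (auto intro: finM_Rm finM_S k)
      also have "mat_mul_l1 n (mat_mul_l1 n F Rm) (S N) i k = mat_mul_l1 n IdM (S N) i k"
        by (rule mat_mul_cong) (use inv i in auto)
      also have "\<dots> = S N i k" by (rule mat_mul_IdM_left[OF i])
      also have "mat_mul_l1 n F (mat_mul_l1 n Rm (S N)) i k
          = mat_mul_l1 n F (\<lambda>m k t. IdM m k t - Q N m k t) i k"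
        by (rule mat_mul_cong) (auto simp: RS k)
      also have "\<dots> t = (\<Sum>m<n. conv_l1 (F i m) (IdM m k) t) - (\<Sum>m<n. conv_l1 (F i m) (Q N m k) t)"
        unfolding mat_mul_l1_def
        by (simp add: conv_diff_right fs_IdM fs_Q k sum_subtractf)
      also have "(\<Sum>m<n. conv_l1 (F i m) (IdM m k) t) = F i k t"
        using mat_mul_IdM_right[OF k, of F i] unfolding mat_mul_l1_def by metis
      finally show ?thesis .
    qed
    have "(\<lambda>N. \<Sum>m<n. conv_l1 (F i m) (Q N m k) t) \<longlonglongrightarrow> 0"
    proof (rule Lim_null_comparison[where g="\<lambda>N. C * q ^ N"])
      show "\<forall>\<^sub>F N in sequentially. norm (\<Sum>m<n. conv_l1 (F i m) (Q N m k) t) \<le> C * q ^ N"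
      proof (rule always_eventually, rule allI)
        fix N
        have "norm (\<Sum>m<n. conv_l1 (F i m) (Q N m k) t) \<le> (\<Sum>m<n. \<bar>conv_l1 (F i m) (Q N m k) t\<bar>)"
          by (simp add: sum_abs)
        also have "\<dots> \<le> (\<Sum>m<n. C * nr (Q N m k))"
          by (rule sum_mono, rule conv_bound) (auto intro: bnd fs_Q k)
        also have "\<dots> = C * (\<Sum>m<n. nr (Q N m k))" by (simp add: sum_distrib_left)
        also have "\<dots> \<le> C * q ^ N" by (rule mult_left_mono[OF colQ[OF k] C0])
        finally show "norm (\<Sum>m<n. conv_l1 (F i m) (Q N m k) t) \<le> C * q ^ N" .
      qed
      show "(\<lambda>N. C * q ^ N) \<longlonglongrightarrow> 0"
        using q_lt1 q_nonneg by (auto intro!: tendsto_mult_right_zero LIMSEQ_power_zero)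
    qed
    hence H: "(\<lambda>N. S N i k t) \<longlonglongrightarrow> F i k t - 0" unfolding eq by (intro tendsto_intros)
    have "F0 i k t = F i k t - 0" by (rule LIMSEQ_unique[OF S_lim[OF i k] H])
    thus ?thesis by simp
  qed
qed

lemma inv_eq: "inv_l1 n Rm = F0"
  unfolding inv_l1_def
proof (rule the_equality)
  have c1: "\<forall>i j. n \<le> i \<or> n \<le> j \<longrightarrow> F0 i j = (\<lambda>_. 0)"
    by (auto simp: F0_def fun_eq_iff)
  have c3: "\<forall>i<n. \<forall>k<n. mat_mul_l1 n F0 Rm i k = (if i = k then delta_e else (\<lambda>_. 0))"
    by (intro allI impI ext) (simp add: F0R IdM_def)
  have c4: "\<forall>i<n. \<forall>k<n. mat_mul_l1 n Rm F0 i k = (if i = k then delta_e else (\<lambda>_. 0))"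
    by (intro allI impI ext) (simp add: RF0 IdM_def)
  show "(\<forall>i j. n \<le> i \<or> n \<le> j \<longrightarrow> F0 i j = (\<lambda>_. 0)) \<and>
    (\<forall>i<n. \<forall>j<n. in_l1 (F0 i j)) \<and>
    (\<forall>i<n. \<forall>k<n. mat_mul_l1 n F0 Rm i k = (if i = k then delta_e else (\<lambda>_. 0))) \<and>
    (\<forall>i<n. \<forall>k<n. mat_mul_l1 n Rm F0 i k = (if i = k then delta_e else (\<lambda>_. 0)))"
    using c1 c3 c4 F0_l1 by blast
next
  fix F assume "(\<forall>i j. n \<le> i \<or> n \<le> j \<longrightarrow> F i j = (\<lambda>_. 0)) \<and>
    (\<forall>i<n. \<forall>j<n. in_l1 (F i j)) \<and>
    (\<forall>i<n. \<forall>k<n. mat_mul_l1 n F Rm i k = (if i = k then delta_e else (\<lambda>_. 0))) \<and>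
    (\<forall>i<n. \<forall>k<n. mat_mul_l1 n Rm F i k = (if i = k then delta_e else (\<lambda>_. 0)))"
  thus "F = F0" by (intro uniq) (auto simp: IdM_def)
qed

end


lemma level_finite:
  fixes a :: "'g \<Rightarrow> real"
  assumes bps: "\<And>T. finite T \<Longrightarrow> (\<Sum>t\<in>T. \<bar>a t\<bar>) \<le> B" and c: "c > 0"
  shows "finite {t. \<bar>a t\<bar> \<ge> c}"
proof (rule ccontr)
  assume inf: "infinite {t. \<bar>a t\<bar> \<ge> c}"
  obtain N :: nat where N: "real N * c > B"
    using reals_Archimedean3[OF c] by blast
  obtain T where T: "T \<subseteq> {t. \<bar>a t\<bar> \<ge> c}" "finite T" "card T = N"
    using infinite_arbitrarily_large[OF inf] by blast
  have "real N * c = (\<Sum>t\<in>T. c)" using T by simp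
  also have "\<dots> \<le> (\<Sum>t\<in>T. \<bar>a t\<bar>)" by (rule sum_mono) (use T in auto)
  also have "\<dots> \<le> B" by (rule bps[OF T(2)])
  finally show False using N by simp
qed

lemma vm_mm: "vec_mat_l1 n a F m = mat_mul_l1 n (\<lambda>_. a) F i m"
  by (simp add: vec_mat_l1_def mat_mul_l1_def)

context Lc begin

lemma x_eq:
  fixes hr :: "nat \<Rightarrow> 'g \<Rightarrow> real"
  assumes fh: "\<And>j. j < n \<Longrightarrow> fs (hr j)" and k: "k < n"
  shows "vec_mat_l1 n (vec_mat_l1 n hr F0) Rm k t = hr k t"
proof -
  have X: "(\<lambda>_::nat. vec_mat_l1 n hr F0) = mat_mul_l1 n (\<lambda>_. hr) F0"
    by (intro ext) (simp add: vm_mm[where i=0] mat_mul_l1_def)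
  have "vec_mat_l1 n (vec_mat_l1 n hr F0) Rm k t = mat_mul_l1 n (mat_mul_l1 n (\<lambda>_. hr) F0) Rm 0 k t"
    by (simp add: vm_mm[where i=0] X)
  also have "\<dots> = mat_mul_l1 n (\<lambda>_. hr) (mat_mul_l1 n F0 Rm) 0 k t"
    by (rule mat_assocB) (auto intro: fh finM_Rm k)
  also have "mat_mul_l1 n (\<lambda>_. hr) (mat_mul_l1 n F0 Rm) 0 k = mat_mul_l1 n (\<lambda>_. hr) IdM 0 k"
    by (rule mat_mul_cong) (auto simp: F0R k fun_eq_iff)
  also have "\<dots> = hr k" by (rule mat_mul_IdM_right[OF k])
  finally show ?thesis .
qed

lemma x_bps:
  fixes hr :: "nat \<Rightarrow> 'g \<Rightarrow> real"
  assumes fh: "\<And>j. j < n \<Longrightarrow> fs (hr j)" and T: "finite T"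
  shows "(\<Sum>t\<in>T. \<bar>vec_mat_l1 n hr F0 k t\<bar>) \<le> 1 / (1 - q) * (\<Sum>j<n. nr (hr j))"
proof -
  have sh: "(\<Sum>t\<in>T. \<bar>F0 j k (- u + t)\<bar>) \<le> 1 / (1 - q)" for j u
  proof -
    have inj: "inj_on (\<lambda>t. - u + t) T" by (auto intro: inj_onI)
    have "(\<Sum>t\<in>T. \<bar>F0 j k (- u + t)\<bar>) = (\<Sum>v\<in>(\<lambda>t. - u + t) ` T. \<bar>F0 j k v\<bar>)"
      by (subst sum.reindex[OF inj]) (simp only: o_def)
    also have "\<dots> \<le> 1 / (1 - q)" by (rule F0_bps) (use T in auto)
    finally show ?thesis .
  qed
  have "(\<Sum>t\<in>T. \<bar>vec_mat_l1 n hr F0 k t\<bar>)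
      = (\<Sum>t\<in>T. \<bar>\<Sum>j<n. \<Sum>u\<in>supp (hr j). hr j u * F0 j k (- u + t)\<bar>)"
    unfolding vec_mat_l1_def
    by (rule sum.cong[OF refl]) (simp add: conv_left[OF fh order_refl])
  also have "\<dots> \<le> (\<Sum>t\<in>T. \<Sum>j<n. \<Sum>u\<in>supp (hr j). \<bar>hr j u\<bar> * \<bar>F0 j k (- u + t)\<bar>)"
  proof (rule sum_mono)
    fix t
    have "\<bar>\<Sum>j<n. \<Sum>u\<in>supp (hr j). hr j u * F0 j k (- u + t)\<bar>
        \<le> (\<Sum>j<n. \<bar>\<Sum>u\<in>supp (hr j). hr j u * F0 j k (- u + t)\<bar>)" by (rule sum_abs)
    also have "\<dots> \<le> (\<Sum>j<n. \<Sum>u\<in>supp (hr j). \<bar>hr j u * F0 j k (- u + t)\<bar>)"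
      by (rule sum_mono, rule sum_abs)
    also have "\<dots> = (\<Sum>j<n. \<Sum>u\<in>supp (hr j). \<bar>hr j u\<bar> * \<bar>F0 j k (- u + t)\<bar>)"
      by (simp only: abs_mult)
    finally show "\<bar>\<Sum>j<n. \<Sum>u\<in>supp (hr j). hr j u * F0 j k (- u + t)\<bar>
        \<le> (\<Sum>j<n. \<Sum>u\<in>supp (hr j). \<bar>hr j u\<bar> * \<bar>F0 j k (- u + t)\<bar>)" .
  qed
  also have "\<dots> = (\<Sum>j<n. \<Sum>u\<in>supp (hr j). \<bar>hr j u\<bar> * (\<Sum>t\<in>T. \<bar>F0 j k (- u + t)\<bar>))"
  proof -
    have "(\<Sum>t\<in>T. \<Sum>j<n. \<Sum>u\<in>supp (hr j). \<bar>hr j u\<bar> * \<bar>F0 j k (- u + t)\<bar>)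
       = (\<Sum>j<n. \<Sum>t\<in>T. \<Sum>u\<in>supp (hr j). \<bar>hr j u\<bar> * \<bar>F0 j k (- u + t)\<bar>)" by (rule sum.swap)
    also have "\<dots> = (\<Sum>j<n. \<Sum>u\<in>supp (hr j). \<Sum>t\<in>T. \<bar>hr j u\<bar> * \<bar>F0 j k (- u + t)\<bar>)"
      by (rule sum.cong[OF refl], rule sum.swap)
    also have "\<dots> = (\<Sum>j<n. \<Sum>u\<in>supp (hr j). \<bar>hr j u\<bar> * (\<Sum>t\<in>T. \<bar>F0 j k (- u + t)\<bar>))"
      by (simp only: sum_distrib_left)
    finally show ?thesis .
  qed
  also have "\<dots> \<le> (\<Sum>j<n. \<Sum>u\<in>supp (hr j). \<bar>hr j u\<bar> * (1 / (1 - q)))"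
    by (intro sum_mono mult_left_mono sh) auto
  also have "\<dots> = 1 / (1 - q) * (\<Sum>j<n. nr (hr j))"
    by (simp add: nr_def sum_distrib_left sum_distrib_right mult.commute)
  finally show ?thesis .
qed

end


definition dz :: "real \<Rightarrow> real" where "dz y = \<bar>y - of_int (round y)\<bar>"

lemma dz_nonneg: "dz y \<ge> 0" by (simp add: dz_def)

lemma dz_le: "dz y \<le> \<bar>y - of_int m\<bar>"
  unfolding dz_def by (rule round_diff_minimal)

lemma dz_abs: "dz y \<le> \<bar>y\<bar>" using dz_le[of y 0] by simp

lemma round_Ints: "y \<in> \<int> \<Longrightarrow> of_int (round y) = y"
  by (auto elim: Ints_cases)

lemma dz_zero_iff: "dz y = 0 \<longleftrightarrow> y \<in> \<int>"
proof
  assume "dz y = 0"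
  hence "y = of_int (round y)" by (simp add: dz_def)
  thus "y \<in> \<int>" by (metis Ints_of_int)
next
  assume "y \<in> \<int>" thus "dz y = 0" by (simp add: dz_def round_Ints)
qed

lemma dz_pos: "y \<notin> \<int> \<Longrightarrow> dz y > 0"
  using dz_nonneg[of y] dz_zero_iff[of y] by linarith

lemma dz_lin:
  assumes "finite I"
  shows "dz (of_int m + (\<Sum>i\<in>I. of_int (c i) * y i)) \<le> (\<Sum>i\<in>I. \<bar>of_int (c i)\<bar> * dz (y i))"
proof -
  let ?r = "m + (\<Sum>i\<in>I. c i * round (y i))"
  have "dz (of_int m + (\<Sum>i\<in>I. of_int (c i) * y i)) \<le> \<bar>of_int m + (\<Sum>i\<in>I. of_int (c i) * y i) - of_int ?r\<bar>"
    by (rule dz_le)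
  also have "of_int m + (\<Sum>i\<in>I. of_int (c i) * y i) - of_int ?r = (\<Sum>i\<in>I. of_int (c i) * (y i - of_int (round (y i))))"
    by (simp add: sum_subtractf right_diff_distrib)
  also have "\<bar>\<dots>\<bar> \<le> (\<Sum>i\<in>I. \<bar>of_int (c i) * (y i - of_int (round (y i)))\<bar>)" by (rule sum_abs)
  also have "\<dots> = (\<Sum>i\<in>I. \<bar>of_int (c i)\<bar> * dz (y i))" by (simp add: abs_mult dz_def)
  finally show ?thesis .
qed

lemma dz_scale:
  fixes M :: int
  assumes M: "M \<ge> 1" and small: "dz y \<le> 1 / (2 * of_int M)"
  shows "of_int M * dz y \<le> dz (of_int M * y)"
proof -
  define r where "r = round y"
  define e where "e = y - of_int r"
  define R where "R = round (of_int M * y)"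
  define z where "z = M * r - R"
  have Mr: "real_of_int M \<ge> 1" using M by simp
  have ed: "\<bar>e\<bar> = dz y" by (simp add: dz_def e_def r_def)
  have Me: "\<bar>of_int M * e\<bar> = of_int M * dz y" using Mr ed by (simp add: abs_mult)
  have Me2: "of_int M * dz y \<le> 1 / 2" using small Mr by (simp add: field_simps)
  have "dz (of_int M * y) = \<bar>of_int M * e + of_int z\<bar>"
    by (simp add: dz_def e_def z_def R_def algebra_simps)
  also have "\<dots> \<ge> of_int M * dz y"
  proof (cases "z = 0")
    case True thus ?thesis using Me by simp
  next
    case False
    hence "\<bar>real_of_int z\<bar> \<ge> 1" by linarith
    thus ?thesis using Me Me2 by linarith
  qed
  finally show ?thesis .
qed



theorem lemma5p3:
  fixes n :: nat
    and M :: "nat \<Rightarrow> int"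
    and g :: "nat \<Rightarrow> nat \<Rightarrow> 'g::group_add \<Rightarrow> int"
    and P :: "'g set"
    and h :: "nat \<Rightarrow> 'g \<Rightarrow> int"
  assumes "countable (UNIV :: 'g set)" and "infinite (UNIV :: 'g set)"
    and "\<forall>m<n. \<forall>k<n. in_ZG (g m k)"
    and "\<forall>k<n. M k > 0"
    and "\<forall>k<n. M k > (\<Sum>m<n. norm1_ZG (g m k))"
    and "\<forall>x\<in>P. \<forall>y\<in>P. x + y \<in> P" and "0 \<notin> P"
    and "\<forall>m<n. \<forall>k<n. supp (g m k) \<subseteq> P"
    and "\<forall>k<n. in_ZG (h k)"
    and "\<not> in_row_module n (fmat M g) h"
  shows "\<exists>s k j. k < n \<and> 1 \<le> j \<and> j \<le> M k - 1 \<and>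
     vec_mat_l1 n (\<lambda>k t. real_of_int (h k t)) (inv_l1 n (to_real_mat (fmat M g))) k s
       - real_of_int j / real_of_int (M k) \<in> \<int>"
proof (rule ccontr)
  assume neg: "\<not> (\<exists>s k j. k < n \<and> 1 \<le> j \<and> j \<le> M k - 1 \<and>
     vec_mat_l1 n (\<lambda>k t. real_of_int (h k t)) (inv_l1 n (to_real_mat (fmat M g))) k s
       - real_of_int j / real_of_int (M k) \<in> \<int>)"
  note semi = assms(6) and P0 = assms(7) and gP = assms(8) and hfin = assms(9) and notrow = assms(10)
  show False
  proof (cases "n = 0")
    case True
    have "in_row_module n (fmat M g) h" using True by (simp add: in_row_module_def)
    with notrow show False by simp
  next
    case False
    hence npos: "n > 0" by simp
    interpret Lc n M g by unfold_locales (use npos assms(3-5) in auto)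
    define hr where "hr = (\<lambda>k t. real_of_int (h k t))"
    define x where "x = vec_mat_l1 n hr F0"
    have fh: "fs (hr j)" if "j < n" for j
    proof -
      have "supp (hr j) = supp (h j)" by (auto simp: supp_def hr_def)
      thus ?thesis using hfin that by (simp add: in_ZG_def)
    qed
    have xdef: "vec_mat_l1 n (\<lambda>k t. real_of_int (h k t)) (inv_l1 n (to_real_mat (fmat M g))) = x"
      using inv_eq by (simp add: x_def hr_def Rm_def)
    have neg': "x k s - real_of_int j / real_of_int (M k) \<notin> \<int>"
      if "k < n" "1 \<le> j" "j \<le> M k - 1" for k s j
      using neg that unfolding xdef by blast
    have xR: "vec_mat_l1 n x Rm k t = hr k t" if "k < n" for k t
      unfolding x_def by (rule x_eq[OF fh that])
    define B where "B = 1 / (1 - q) * (\<Sum>j<n. nr (hr j))"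
    have xbps: "(\<Sum>t\<in>T. \<bar>x k t\<bar>) \<le> B" if "finite T" for k T
      unfolding x_def B_def by (rule x_bps[OF fh that])
    have lvl: "finite {t. \<bar>x k t\<bar> \<ge> c}" if "c > 0" for k c
      by (rule level_finite[OF xbps that])

    have intg: "x k t \<in> \<int>" if k: "k < n" and Mx: "real_of_int (M k) * x k t \<in> \<int>" for k t
    proof -
      obtain N where N: "real_of_int (M k) * x k t = of_int N" using Mx by (auto elim: Ints_cases)
      have Mp: "real_of_int (M k) > 0" using M_pos[OF k] .
      have Mpi: "M k > 0" using Mp by simp
      define j where "j = N mod M k"
      have dec: "real_of_int N = real_of_int (M k) * real_of_int (N div M k) + real_of_int j"
      proof -
        have decI: "N = M k * (N div M k) + j" unfolding j_def by (simp add: mult_div_mod_eq)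
        show ?thesis using arg_cong[OF decI, of real_of_int] by simp
      qed
      have xN: "x k t = real_of_int N / real_of_int (M k)" using N Mp by (simp add: field_simps)
      have key: "x k t - real_of_int j / real_of_int (M k) = real_of_int (N div M k)"
        using xN dec Mp by (simp add: field_simps)
      show ?thesis
      proof (cases "j = 0")
        case True thus ?thesis using key by simp
      next
        case False
        have "0 \<le> j" "j < M k" using Mpi by (simp_all add: j_def)
        hence "1 \<le> j" "j \<le> M k - 1" using False by auto
        with neg'[OF k] key show ?thesis by (metis Ints_of_int)
      qed
    qed

    have eqn: "real_of_int (M k) * x k t
        = hr k t + (\<Sum>m<n. \<Sum>s\<in>supp (g m k). real_of_int (g m k s) * x m (t - s))"
      if k: "k < n" for k t
    proof -
      have c: "conv_l1 (x m) (Rm m k) t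
          = (if m = k then real_of_int (M k) * x m t else 0) - (\<Sum>s\<in>supp (g m k). real_of_int (g m k s) * x m (t - s))"
        if m: "m < n" for m
      proof -
        have "conv_l1 (x m) (Rm m k) t = conv_l1 (x m) (\<lambda>t. if m = k then real_of_int (M k) * delta_e t else 0) t
             - conv_l1 (x m) (gr m k) t"
          unfolding Rm_fun by (simp add: conv_diff_right fs_if fs_gr m k)
        also have "conv_l1 (x m) (gr m k) t = (\<Sum>s\<in>supp (g m k). x m (t - s) * gr m k s)"
          by (rule conv_right) (use fs_gr[OF m k] in \<open>auto simp: supp_gr\<close>)
        finally show ?thesis by (simp add: conv_if_right gr_def mult.commute)
      qed
      have "hr k t = (\<Sum>m<n. conv_l1 (x m) (Rm m k) t)" using xR[OF k, of t] by (simp add: vec_mat_l1_def)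
      also have "\<dots> = (\<Sum>m<n. (if m = k then real_of_int (M k) * x m t else 0))
          - (\<Sum>m<n. \<Sum>s\<in>supp (g m k). real_of_int (g m k s) * x m (t - s))"
        by (simp add: c sum_subtractf)
      also have "(\<Sum>m<n. (if m = k then real_of_int (M k) * x m t else 0)) = real_of_int (M k) * x k t"
        using k by simp
      finally show ?thesis by simp
    qed

    have pred: "\<exists>m s. m < n \<and> s \<in> supp (g m k) \<and> x m (t - s) \<notin> \<int> \<and>
        (dz (x k t) \<le> 1 / (2 * real_of_int (M k)) \<longrightarrow> dz (x k t) \<le> dz (x m (t - s)))"
      if k: "k < n" and nz: "x k t \<notin> \<int>" for k t
    proof -
      let ?I = "Sigma {..<n} (\<lambda>m. supp (g m k))"
      let ?D = "\<lambda>p. dz (x (fst p) (t - snd p))"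
      have finI: "finite ?I" using assms(3) k by (auto simp: in_ZG_def)
      have My: "real_of_int (M k) * x k t
          = of_int (h k t) + (\<Sum>p\<in>?I. of_int (g (fst p) k (snd p)) * x (fst p) (t - snd p))"
      proof -
        have "(\<Sum>m<n. \<Sum>s\<in>supp (g m k). real_of_int (g m k s) * x m (t - s))
            = (\<Sum>(m,s)\<in>?I. real_of_int (g m k s) * x m (t - s))"
          by (rule sum.Sigma) (use assms(3) k in \<open>auto simp: in_ZG_def\<close>)
        also have "\<dots> = (\<Sum>p\<in>?I. of_int (g (fst p) k (snd p)) * x (fst p) (t - snd p))"
          by (simp add: case_prod_beta)
        finally show ?thesis using eqn[OF k, of t] by (simp add: hr_def)
      qed
      have Mxnz: "real_of_int (M k) * x k t \<notin> \<int>" using intg[OF k] nz by blast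
      have dpos: "dz (real_of_int (M k) * x k t) > 0" by (rule dz_pos[OF Mxnz])
      have dle: "dz (real_of_int (M k) * x k t) \<le> (\<Sum>p\<in>?I. \<bar>of_int (g (fst p) k (snd p))\<bar> * ?D p)"
        unfolding My by (rule dz_lin[OF finI])
      have Ine: "?I \<noteq> {}"
      proof
        assume e: "?I = {}"
        have "0 < (\<Sum>p\<in>?I. \<bar>of_int (g (fst p) k (snd p))\<bar> * ?D p)" using dle dpos by linarith
        thus False unfolding e by simp
      qed
      define Dm where "Dm = Max (?D ` ?I)"
      have "Dm \<in> ?D ` ?I" unfolding Dm_def using finI Ine by (intro Max_in) auto
      then obtain p0 where p0': "p0 \<in> ?I" "Dm = ?D p0" by (rule imageE)
      have p0: "p0 \<in> ?I" "?D p0 = Dm" using p0' by simp_all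
      have Dmax: "?D p \<le> Dm" if "p \<in> ?I" for p
        unfolding Dm_def using finI that by (auto intro: Max_ge)
      define K where "K = (\<Sum>m<n. norm1_ZG (g m k))"
      have Ksum: "(\<Sum>p\<in>?I. \<bar>real_of_int (g (fst p) k (snd p))\<bar>) = real_of_int K"
      proof -
        have "(\<Sum>p\<in>?I. \<bar>real_of_int (g (fst p) k (snd p))\<bar>) = (\<Sum>(m,s)\<in>?I. \<bar>real_of_int (g m k s)\<bar>)"
          by (simp add: case_prod_beta)
        also have "\<dots> = (\<Sum>m<n. \<Sum>s\<in>supp (g m k). \<bar>real_of_int (g m k s)\<bar>)"
          by (rule sum.Sigma[symmetric]) (use assms(3) k in \<open>auto simp: in_ZG_def\<close>)
        also have "\<dots> = real_of_int K" by (simp add: K_def norm1_ZG_def)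
        finally show ?thesis .
      qed
      have KM: "real_of_int K \<le> real_of_int (M k) - 1"
      proof -
        have "K \<le> M k - 1" using assms(5) k unfolding K_def by auto
        hence "real_of_int K \<le> real_of_int (M k - 1)" by (simp only: of_int_le_iff)
        thus ?thesis by simp
      qed
      have K0: "real_of_int K \<ge> 0"
        unfolding K_def norm1_ZG_def by (simp add: sum_nonneg)
      have "dz (real_of_int (M k) * x k t) \<le> (\<Sum>p\<in>?I. \<bar>of_int (g (fst p) k (snd p))\<bar> * Dm)"
        using dle by (rule order_trans) (intro sum_mono mult_left_mono Dmax, auto)
      also have "\<dots> = Dm * real_of_int K" by (simp only: sum_distrib_right[symmetric] Ksum) (rule mult.commute)
      finally have dK: "dz (real_of_int (M k) * x k t) \<le> Dm * real_of_int K" .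
      have Dm0: "Dm > 0"
      proof (rule ccontr)
        assume "\<not> Dm > 0"
        hence "Dm * real_of_int K \<le> 0" using K0 by (simp add: mult_nonpos_nonneg)
        with dK dpos show False by linarith
      qed
      obtain m s where ms: "p0 = (m, s)" by (cases p0)
      have m: "m < n" and s: "s \<in> supp (g m k)" using p0(1) ms by auto
      have Dms: "dz (x m (t - s)) = Dm" using p0(2) ms by simp
      have nzm: "x m (t - s) \<notin> \<int>" using Dms Dm0 dz_zero_iff by force
      have mono: "dz (x k t) \<le> dz (x m (t - s))" if small: "dz (x k t) \<le> 1 / (2 * real_of_int (M k))"
      proof (rule ccontr)
        assume "\<not> ?thesis"
        hence lt: "Dm < dz (x k t)" using Dms by simp
        have M1: "M k \<ge> 1" using M_ge1[OF k] by simp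
        have "real_of_int (M k) * dz (x k t) \<le> dz (real_of_int (M k) * x k t)"
          by (rule dz_scale[OF M1 small])
        also have "\<dots> \<le> Dm * real_of_int K" by (rule dK)
        also have "\<dots> \<le> Dm * (real_of_int (M k) - 1)"
          by (rule mult_left_mono[OF KM]) (use Dm0 in simp)
        also have "\<dots> \<le> dz (x k t) * (real_of_int (M k) - 1)"
          by (rule mult_right_mono) (use lt M_ge1[OF k] in auto)
        finally have "dz (x k t) \<le> 0" by (simp add: algebra_simps)
        with dz_pos[OF nz] show False by simp
      qed
      show ?thesis using m s nzm mono by blast
    qed

    define Nset where "Nset = {p. snd p < n \<and> x (snd p) (fst p) \<notin> \<int>}"
    define dp where "dp p = dz (x (snd p) (fst p))" for p
    define Rel where "Rel p p' \<longleftrightarrow> snd p' < n \<and> (\<exists>s\<in>P. fst p' = fst p - s) \<and> x (snd p') (fst p') \<notin> \<int> \<and>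
        (dp p \<le> 1 / (2 * real_of_int (M (snd p))) \<longrightarrow> dp p \<le> dp p')" for p p'
    have ex: "\<exists>p'. Rel p p'" if "p \<in> Nset" for p
    proof -
      obtain t k where p: "p = (t, k)" by (cases p)
      have k: "k < n" and nz: "x k t \<notin> \<int>" using that p by (auto simp: Nset_def)
      obtain m s where ms: "m < n" "s \<in> supp (g m k)" "x m (t - s) \<notin> \<int>"
        "dz (x k t) \<le> 1 / (2 * real_of_int (M k)) \<longrightarrow> dz (x k t) \<le> dz (x m (t - s))"
        using pred[OF k nz] by blast
      have "s \<in> P" using gP ms(1,2) k by blast
      hence "Rel p (t - s, m)" using ms p by (auto simp: Rel_def dp_def)
      thus ?thesis by blast
    qed
    have Nempty: "Nset = {}"
    proof (rule ccontr)
      assume "Nset \<noteq> {}"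
      then obtain p0 where p0: "p0 \<in> Nset" by blast
      define nxt where "nxt p = (SOME p'. Rel p p')" for p
      define sq where "sq i = (nxt ^^ i) p0" for i
      have sqS: "sq (Suc i) = nxt (sq i)" for i by (simp add: sq_def)
      have inN: "sq i \<in> Nset" for i
      proof (induction i)
        case 0 thus ?case using p0 by (simp add: sq_def)
      next
        case (Suc i)
        have "Rel (sq i) (nxt (sq i))" unfolding nxt_def by (rule someI_ex[OF ex[OF Suc.IH]])
        thus ?case by (simp add: sqS Rel_def Nset_def)
      qed
      have rel: "Rel (sq i) (sq (Suc i))" for i
        unfolding sqS nxt_def by (rule someI_ex[OF ex[OF inN]])
      have chain: "\<exists>p\<in>P. fst (sq i) = fst (sq (i + Suc l)) + p" for i l
      proof (induction l)
        case 0
        obtain s where "s \<in> P" "fst (sq (Suc i)) = fst (sq i) - s" using rel[of i] by (auto simp: Rel_def)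
        thus ?case by (intro bexI[of _ s]) simp_all
      next
        case (Suc l)
        then obtain p where p: "p \<in> P" "fst (sq i) = fst (sq (i + Suc l)) + p" by blast
        obtain s where s: "s \<in> P" "fst (sq (Suc (i + Suc l))) = fst (sq (i + Suc l)) - s"
          using rel[of "i + Suc l"] by (auto simp: Rel_def)
        have "fst (sq i) = fst (sq (i + Suc (Suc l))) + (s + p)"
          using p(2) s(2) by (simp add: add.assoc[symmetric])
        moreover have "s + p \<in> P" using semi s(1) p(1) by blast
        ultimately show ?case by blast
      qed
      have injsq: "inj sq"
      proof (rule injI)
        fix i j assume eq: "sq i = sq j"
        show "i = j"
        proof (rule ccontr)
          assume "i \<noteq> j"
          then consider "i < j" | "j < i" by linarith
          thus False
          proof cases
            case 1
            obtain l where "j = i + Suc l" using less_imp_Suc_add[OF 1] by auto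
            then obtain p where p: "p \<in> P" "fst (sq i) = fst (sq j) + p" using chain by blast
            have e1: "fst (sq i) = fst (sq j)" using eq by simp
            have "fst (sq j) + 0 = fst (sq j)" by (rule add_0_right)
            also have "\<dots> = fst (sq i)" using e1 by (rule sym)
            also have "\<dots> = fst (sq j) + p" by (rule p(2))
            finally have "0 = p" by (simp only: add_left_cancel)
            hence "p = 0" by (rule sym)
            with p(1) P0 show False by simp
          next
            case 2
            obtain l where "i = j + Suc l" using less_imp_Suc_add[OF 2] by auto
            then obtain p where p: "p \<in> P" "fst (sq j) = fst (sq i) + p" using chain by blast
            have e1: "fst (sq j) = fst (sq i)" using eq[symmetric] by simp
            have "fst (sq i) + 0 = fst (sq i)" by (rule add_0_right)
            also have "\<dots> = fst (sq j)" using e1 by (rule sym)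
            also have "\<dots> = fst (sq i) + p" by (rule p(2))
            finally have "0 = p" by (simp only: add_left_cancel)
            hence "p = 0" by (rule sym)
            with p(1) P0 show False by simp
          qed
        qed
      qed
      define E where "E = {p \<in> Nset. dp p > 1 / (2 * real_of_int (M (snd p)))}"
      have Efin: "finite E"
      proof (rule finite_subset)
        show "E \<subseteq> (\<Union>k<n. {t. \<bar>x k t\<bar> \<ge> 1 / (2 * real_of_int (M k))} \<times> {k})"
        proof
          fix p assume pE: "p \<in> E"
          obtain t k where p: "p = (t, k)" by (cases p)
          have k: "k < n" using pE p by (simp add: E_def Nset_def)
          have "\<bar>x k t\<bar> \<ge> 1 / (2 * real_of_int (M k))"
            using pE p dz_abs[of "x k t"] by (simp add: E_def dp_def)
          thus "p \<in> (\<Union>k<n. {t. \<bar>x k t\<bar> \<ge> 1 / (2 * real_of_int (M k))} \<times> {k})" using k p by blast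
        qed
        show "finite (\<Union>k<n. {t. \<bar>x k t\<bar> \<ge> 1 / (2 * real_of_int (M k))} \<times> {k})"
          by (intro finite_UN_I finite_lessThan finite_cartesian_product lvl) (use assms(4) in auto)
      qed
      obtain i0 where i0: "sq -` E \<subseteq> {..<i0}"
        using finite_nat_bounded[OF finite_vimageI[OF Efin injsq]] by blast
      have notE: "sq i \<notin> E" if "i \<ge> i0" for i using i0 that by auto
      have monod: "dp (sq i0) \<le> dp (sq i)" if "i \<ge> i0" for i
        using that
      proof (induction i rule: dec_induct)
        case base thus ?case by simp
      next
        case (step i)
        have "dp (sq i) \<le> 1 / (2 * real_of_int (M (snd (sq i))))"
          using notE[OF step.hyps(1)] inN[of i] by (auto simp: E_def)
        hence "dp (sq i) \<le> dp (sq (Suc i))" using rel[of i] by (simp add: Rel_def)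
        thus ?case using step.IH by linarith
      qed
      define c where "c = dp (sq i0)"
      have c0: "c > 0" using inN[of i0] unfolding c_def dp_def Nset_def by (auto intro: dz_pos)
      have Lfin: "finite (\<Union>k<n. {t. \<bar>x k t\<bar> \<ge> c} \<times> {k})"
        by (intro finite_UN_I finite_lessThan finite_cartesian_product lvl c0) auto
      have sub: "sq ` {i0..} \<subseteq> (\<Union>k<n. {t. \<bar>x k t\<bar> \<ge> c} \<times> {k})"
      proof
        fix p assume "p \<in> sq ` {i0..}"
        then obtain i where i: "i \<ge> i0" "p = sq i" by auto
        obtain t k where p: "p = (t, k)" by (cases p)
        have sqi: "sq i = (t, k)" using i(2) p by simp
        have k: "k < n" using inN[of i] unfolding sqi Nset_def by simp
        have "c \<le> dp p" using monod[OF i(1)] i by (simp add: c_def)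
        hence "\<bar>x k t\<bar> \<ge> c" using dz_abs[of "x k t"] p by (simp add: dp_def)
        thus "p \<in> (\<Union>k<n. {t. \<bar>x k t\<bar> \<ge> c} \<times> {k})" using k p by blast
      qed
      have "finite (sq ` {i0..})" using finite_subset[OF sub Lfin] .
      hence "finite {i0..}" using finite_imageD inj_on_subset[OF injsq] by blast
      thus False using infinite_Ici by blast
    qed
    have allint: "x k t \<in> \<int>" if "k < n" for k t
      using Nempty that by (auto simp: Nset_def)

    define a where "a k t = round (x k t)" for k t
    have ax: "real_of_int (a k t) = x k t" if "k < n" for k t
      using allint[OF that] by (simp add: a_def round_Ints)
    have aZG: "in_ZG (a k)" if k: "k < n" for k
    proof -
      have "supp (a k) \<subseteq> {t. \<bar>x k t\<bar> \<ge> 1}"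
      proof
        fix t assume "t \<in> supp (a k)"
        hence "a k t \<noteq> 0" by (simp add: supp_def)
        hence "\<bar>real_of_int (a k t)\<bar> \<ge> 1" by linarith
        thus "t \<in> {t. \<bar>x k t\<bar> \<ge> 1}" using ax[OF k] by simp
      qed
      thus ?thesis unfolding in_ZG_def using lvl[of 1 k] finite_subset by auto
    qed
    have hrow: "h m = vec_mat_ZG n a (fmat M g) m" if m: "m < n" for m
    proof
      fix t
      have fsup: "finite (supp (fmat M g k m))" if k: "k < n" for k
      proof -
        have "supp (fmat M g k m) = supp (Rm k m)" by (auto simp: supp_def Rm_def to_real_mat_def)
        thus ?thesis using fs_Rm[OF k m] by simp
      qed
      have "real_of_int (vec_mat_ZG n a (fmat M g) m t)
          = (\<Sum>k<n. \<Sum>s\<in>supp (fmat M g k m). real_of_int (a k (t - s)) * real_of_int (fmat M g k m s))"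
        by (simp add: vec_mat_ZG_def conv_ZG_def)
      also have "\<dots> = (\<Sum>k<n. \<Sum>s\<in>supp (fmat M g k m). x k (t - s) * Rm k m s)"
        by (rule sum.cong[OF refl], rule sum.cong[OF refl]) (auto simp: ax Rm_def to_real_mat_def)
      also have "\<dots> = (\<Sum>k<n. conv_l1 (x k) (Rm k m) t)"
      proof (rule sum.cong[OF refl])
        fix k assume "k \<in> {..<n}"
        hence k: "k < n" by simp
        have supR: "supp (Rm k m) \<subseteq> supp (fmat M g k m)" by (auto simp: supp_def Rm_def to_real_mat_def)
        show "(\<Sum>s\<in>supp (fmat M g k m). x k (t - s) * Rm k m s) = conv_l1 (x k) (Rm k m) t"
          by (rule conv_right[symmetric, OF fsup[OF k] supR])
      qed
      also have "\<dots> = vec_mat_l1 n x Rm m t" by (simp add: vec_mat_l1_def)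
      also have "\<dots> = real_of_int (h m t)" by (simp add: xR[OF m] hr_def)
      finally show "h m t = vec_mat_ZG n a (fmat M g) m t" by simp
    qed
    have "in_row_module n (fmat M g) h"
      unfolding in_row_module_def using aZG hrow by blast
    with notrow show False by simp
  qed
qed


end
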